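(* Let $\alpha\in[1/2,1)\cup(1,\infty)$, let $p_X$ be a distribution on a finite set $\mathcal X$ and $p_{Y\mid X}$ a channel to a finite set $\mathcal Y$, and let $\tilde q^{(0)}_{X,Y}$ be an initial joint distribution on $\mathcal X\times\mathcal Y$. (i) If $\alpha\in[1/2,1)$, define for $k\ge0$: $q_Y^{(k)}(y)=\sum_x\tilde q^{(k)}_{X,Y}(x,y)$ and $\tilde q^{(k+1)}_{X,Y}(x,y)=\bar q_X(x)\bar q_{Y\mid X}(y\mid x)$ with $$\bar q_X(x)=\frac{p_X(x)\big(\sum_yp_{Y\mid X}(y\mid x)^\alpha q^{(k)}_Y(y)^{1-\alpha}\big)^{1/\alpha}}{\sum_{x'}p_X(x')\big(\sum_yp_{Y\mid X}(y\mid x')^\alpha q^{(k)}_Y(y)^{1-\alpha}\big)^{1/\alpha}},\quad \bar q_{Y\mid X}(y\mid x)=\frac{p_{Y\mid X}(y\mid x)^\alpha q^{(k)}_Y(y)^{1-\alpha}}{\sum_{y'}p_{Y\mid X}(y'\mid x)^\alpha q^{(k)}_Y(y')^{1-\alpha}}.$$ Then $\lim_{k\to\infty}F_\alpha^{\mathrm{LP}}(\tilde q^{(k+1)}_{X,Y},q_Y^{(k)})=I_\alpha^{\mathrm{LP}}(X;Y)$. (ii) If $\alpha\in(1,\infty)$, define for $k\ge0$: $r^{(k)}_{X\mid Y}(x\mid y)=\tilde q^{(k)}_{X,Y}(x,y)/\sum_{x'}\tilde q^{(k)}_{X,Y}(x',y)$ and $\tilde q^{(k+1)}_{X,Y}(x,y)=\hat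 q_X(x)\hat q_{Y\mid X}(y\mid x)$ with $$\hat q_X(x)=\frac{p_X(x)^{\frac{\alpha}{2\alpha-1}}\big(\sum_yp_{Y\mid X}(y\mid x)r^{(k)}_{X\mid Y}(x\mid y)^{1-\frac1\alpha}\big)^{\frac{\alpha}{2\alpha-1}}}{\sum_{x'}p_X(x')^{\frac{\alpha}{2\alpha-1}}\big(\sum_yp_{Y\mid X}(y\mid x')r^{(k)}_{X\mid Y}(x'\mid y)^{1-\frac1\alpha}\big)^{\frac{\alpha}{2\alpha-1}}},\quad \hat q_{Y\mid X}(y\mid x)=\frac{p_{Y\mid X}(y\mid x)r^{(k)}_{X\mid Y}(x\mid y)^{1-\frac1\alpha}}{\sum_{x'}p_{Y\mid X}(y\mid x')r^{(k)}_{X\mid Y}(x'\mid y)^{1-\frac1\alpha}}.$$ Then $\lim_{k\to\infty}\tilde F_\alpha^{\mathrm{LP}}(\tilde q^{(k+1)}_{X,Y},r^{(k)}_{X\mid Y})=I_\alpha^{\mathrm{LP}}(X;Y)$.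
   Context: $\log$ is natural and $D$ is the Kullback–Leibler divergence. For a joint distribution $\tilde q_{X,Y}=\tilde q_X\tilde q_{Y\mid X}$, a distribution $q_Y$ on $\mathcal Y$ and a reverse channel $r_{X\mid Y}$ (a family of distributions $r_{X\mid Y}(\cdot\mid y)$ on $\mathcal X$): $F_\alpha^{\mathrm{LP}}(\tilde q_{X,Y},q_Y):=\frac{\alpha}{1-\alpha}D(\tilde q_{X,Y}\|\tilde q_Xp_{Y\mid X})+D(\tilde q_X\tilde q_{Y\mid X}\|\tilde q_Xq_Y)+\frac{\alpha}{1-\alpha}D(\tilde q_X\|p_X)$ and $\tilde F_\alpha^{\mathrm{LP}}(\tilde q_{X,Y},r_{X\mid Y}):=\frac{\alpha}{1-\alpha}D(\tilde q_{X,Y}\|\tilde q_Xp_{Y\mid X})+\mathbb E^{\tilde q_{X,Y}}[\log\frac{r_{X\mid Y}(X\mid Y)}{\tilde q_X(X)}]+\frac{\alpha}{1-\alpha}D(\tilde q_X\|p_X)$. The Lapidoth–Pfister mutual information is $I_\alpha^{\mathrm{LP}}(X;Y):=\min_{q_X}\min_{q_Y}D_\alpha(p_Xp_{Y\mid X}\|q_Xq_Y)$ with $D_\alpha(p\|q):=\frac{1}{\alpha-1}\log\sum_zp(z)^\alpha q(z)^{1-\alpha}$. *)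

theory Defs
  imports "HOL-Analysis.Analysis"
begin

definition is_dist :: "('a::finite \<Rightarrow> real) \<Rightarrow> bool" where
  "is_dist p \<longleftrightarrow> (\<forall>z. 0 \<le> p z) \<and> sum p UNIV = 1"

definition KL :: "('a::finite \<Rightarrow> real) \<Rightarrow> ('a \<Rightarrow> real) \<Rightarrow> ereal" where
  "KL p q = (if \<exists>z. p z > 0 \<and> q z = 0 then \<infinity>
             else ereal (\<Sum>z\<in>{z. p z > 0}. p z * ln (p z / q z)))"

definition renyi_div :: "real \<Rightarrow> ('a::finite \<Rightarrow> real) \<Rightarrow> ('a \<Rightarrow> real) \<Rightarrow> ereal" where
  "renyi_div a p q =
     (if 1 < a then
        (if \<exists>z. p z > 0 \<and> q z = 0 then \<infinity>
         else ereal (1 / (a - 1) * ln (\<Sum>z\<in>{z. p z > 0}. p z powr a * q z powr (1 - a))))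
      else
        (let s = (\<Sum>z\<in>{z. p z > 0}. p z powr a * q z powr (1 - a)) in
         if s = 0 then \<infinity> else ereal (1 / (a - 1) * ln s)))"

definition margX :: "('x::finite \<times> 'y::finite \<Rightarrow> real) \<Rightarrow> 'x \<Rightarrow> real" where
  "margX q x = (\<Sum>y\<in>UNIV. q (x, y))"

definition margY :: "('x::finite \<times> 'y::finite \<Rightarrow> real) \<Rightarrow> 'y \<Rightarrow> real" where
  "margY q y = (\<Sum>x\<in>UNIV. q (x, y))"

text \<open>Lapidoth--Pfister mutual information: min over q_X, q_Y of D_alpha(p_X p_{Y|X} || q_X q_Y).
  W x y stands for p_{Y|X}(y|x).\<close>
definition I_LP :: "real \<Rightarrow> ('x::finite \<Rightarrow> real) \<Rightarrow> ('x \<Rightarrow> 'y::finite \<Rightarrow> real) \<Rightarrow> ereal" where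
  "I_LP a pX W = (INF qX\<in>{q. is_dist q}. INF qY\<in>{q. is_dist q}.
      renyi_div a (\<lambda>(x, y). pX x * W x y) (\<lambda>(x, y). qX x * qY y))"

definition F_LP :: "real \<Rightarrow> ('x::finite \<Rightarrow> real) \<Rightarrow> ('x \<Rightarrow> 'y::finite \<Rightarrow> real)
    \<Rightarrow> ('x \<times> 'y \<Rightarrow> real) \<Rightarrow> ('y \<Rightarrow> real) \<Rightarrow> ereal" where
  "F_LP a pX W qt qY =
     ereal (a / (1 - a)) * KL qt (\<lambda>(x, y). margX qt x * W x y)
     + KL qt (\<lambda>(x, y). margX qt x * qY y)
     + ereal (a / (1 - a)) * KL (margX qt) pX"

text \<open>Expectation under qt of log (r(X|Y) / qt_X(X)); r x y stands for r_{X|Y}(x|y).\<close>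
definition exp_log_ratio :: "('x::finite \<times> 'y::finite \<Rightarrow> real) \<Rightarrow> ('x \<Rightarrow> 'y \<Rightarrow> real) \<Rightarrow> ereal" where
  "exp_log_ratio qt r =
     (if \<exists>x y. qt (x, y) > 0 \<and> r x y = 0 then -\<infinity>
      else ereal (\<Sum>z\<in>{z. qt z > 0}. qt z * ln (r (fst z) (snd z) / margX qt (fst z))))"

definition Ft_LP :: "real \<Rightarrow> ('x::finite \<Rightarrow> real) \<Rightarrow> ('x \<Rightarrow> 'y::finite \<Rightarrow> real)
    \<Rightarrow> ('x \<times> 'y \<Rightarrow> real) \<Rightarrow> ('x \<Rightarrow> 'y \<Rightarrow> real) \<Rightarrow> ereal" where
  "Ft_LP a pX W qt r =
     ereal (a / (1 - a)) * KL qt (\<lambda>(x, y). margX qt x * W x y)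
     + exp_log_ratio qt r
     + ereal (a / (1 - a)) * KL (margX qt) pX"

definition step_i :: "real \<Rightarrow> ('x::finite \<Rightarrow> real) \<Rightarrow> ('x \<Rightarrow> 'y::finite \<Rightarrow> real)
    \<Rightarrow> ('x \<times> 'y \<Rightarrow> real) \<Rightarrow> ('x \<times> 'y \<Rightarrow> real)" where
  "step_i a pX W q =
     (let qY = margY q;
          g = (\<lambda>x. \<Sum>y\<in>UNIV. W x y powr a * qY y powr (1 - a));
          qbX = (\<lambda>x. pX x * g x powr (1 / a) / (\<Sum>x'\<in>UNIV. pX x' * g x' powr (1 / a)));
          qbYX = (\<lambda>x y. W x y powr a * qY y powr (1 - a) / g x)
      in (\<lambda>(x, y). qbX x * qbYX x y))"

definition rev_chan :: "('x::finite \<times> 'y::finite \<Rightarrow> real) \<Rightarrow> 'x \<Rightarrow> 'y \<Rightarrow> real" where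
  "rev_chan q x y = q (x, y) / (\<Sum>x'\<in>UNIV. q (x', y))"

definition step_ii :: "real \<Rightarrow> ('x::finite \<Rightarrow> real) \<Rightarrow> ('x \<Rightarrow> 'y::finite \<Rightarrow> real)
    \<Rightarrow> ('x \<times> 'y \<Rightarrow> real) \<Rightarrow> ('x \<times> 'y \<Rightarrow> real)" where
  "step_ii a pX W q =
     (let r = rev_chan q;
          b = a / (2 * a - 1);
          h = (\<lambda>x y. W x y * r x y powr (1 - 1 / a));
          qhX = (\<lambda>x. pX x powr b * (\<Sum>y\<in>UNIV. h x y) powr b
                     / (\<Sum>x'\<in>UNIV. pX x' powr b * (\<Sum>y\<in>UNIV. h x' y) powr b));
          qhYX = (\<lambda>x y. h x y / (\<Sum>y'\<in>UNIV. h x y'))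
      in (\<lambda>(x, y). qhX x * qhYX x y))"

end

theory Submission
  imports Defs
begin


lemma sum_UNIV_pair:
  fixes f :: "'x::finite \<times> 'y::finite \<Rightarrow> real"
  shows "(\<Sum>z\<in>UNIV. f z) = (\<Sum>x\<in>UNIV. \<Sum>y\<in>UNIV. f (x, y))"
  using sum.cartesian_product[of "\<lambda>x y. f (x,y)" UNIV UNIV] by (simp add: UNIV_Times_UNIV)

lemma sum_joint_snd:
  fixes t :: "'x::finite \<times> 'y::finite \<Rightarrow> real"
  shows "(\<Sum>z\<in>UNIV. t z * f (snd z)) = (\<Sum>y\<in>UNIV. margY t y * f y)"
  unfolding sum_UNIV_pair margY_def sum_distrib_right snd_conv
  by (rule sum.swap)

lemma sum_joint_fst:
  fixes t :: "'x::finite \<times> 'y::finite \<Rightarrow> real"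
  shows "(\<Sum>z\<in>UNIV. t z * f (fst z)) = (\<Sum>x\<in>UNIV. margX t x * f x)"
  unfolding sum_UNIV_pair margX_def
  by (simp add: sum_distrib_right)

lemma gibbs:
  fixes t s :: "'a::finite \<Rightarrow> real"
  assumes "\<And>z. 0 \<le> t z" "\<And>z. 0 \<le> s z" "\<And>z. 0 < t z \<Longrightarrow> 0 < s z"
  shows "sum t UNIV - sum s UNIV \<le> (\<Sum>z\<in>UNIV. t z * ln (t z / s z))"
proof -
  have "t z - s z \<le> t z * ln (t z / s z)" for z
  proof (cases "t z = 0")
    case True then show ?thesis using assms(2)[of z] by simp
  next
    case False
    then have tp: "0 < t z" using assms(1)[of z] by simp
    with assms(3) have sp: "0 < s z" by blast
    have "ln (s z / t z) \<le> s z / t z - 1" using tp sp by (intro ln_le_minus_one) simp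
    moreover have "ln (s z / t z) = - ln (t z / s z)" using tp sp by (simp add: ln_div)
    ultimately have "- ln (t z / s z) \<le> s z / t z - 1" by simp
    then have "t z * (- ln (t z / s z)) \<le> t z * (s z / t z - 1)"
      using tp by (intro mult_left_mono) auto
    then show ?thesis using tp by (simp add: algebra_simps)
  qed
  then show ?thesis by (simp add: sum_subtractf[symmetric] sum_mono)
qed

lemma young0:
  fixes u v th :: real
  assumes "0 \<le> u" "0 \<le> v" "0 < th" "th < 1"
  shows "u powr th * v powr (1 - th) \<le> th * u + (1 - th) * v"
proof (cases "u = 0 \<or> v = 0")
  case True then show ?thesis using assms by auto
next
  case False then show ?thesis using assms Youngs_inequality_0[of th "1-th" u v] by auto
qed

lemma holder_sum:
  fixes A B :: "'a \<Rightarrow> real"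
  assumes fin: "finite I" and A: "\<And>i. i \<in> I \<Longrightarrow> 0 \<le> A i" and B: "\<And>i. i \<in> I \<Longrightarrow> 0 \<le> B i"
    and th: "0 < th" "th < 1"
  shows "(\<Sum>i\<in>I. A i powr th * B i powr (1 - th)) \<le> (sum A I) powr th * (sum B I) powr (1 - th)"
proof -
  define SA SB where "SA = sum A I" and "SB = sum B I"
  have SA0: "0 \<le> SA" and SB0: "0 \<le> SB" using A B by (auto simp: SA_def SB_def intro: sum_nonneg)
  show ?thesis
  proof (cases "SA = 0 \<or> SB = 0")
    case True
    then have "\<forall>i\<in>I. A i = 0 \<or> B i = 0"
      using sum_nonneg_eq_0_iff[OF fin] A B by (auto simp: SA_def SB_def)
    then have "(\<Sum>i\<in>I. A i powr th * B i powr (1 - th)) = 0"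
      using th by (intro sum.neutral) auto
    then show ?thesis using SA0 SB0 by (simp add: SA_def[symmetric] SB_def[symmetric])
  next
    case False
    then have SAp: "0 < SA" and SBp: "0 < SB" using SA0 SB0 by auto
    have "A i powr th * B i powr (1 - th)
          = SA powr th * SB powr (1 - th) * ((A i / SA) powr th * (B i / SB) powr (1 - th))" if "i \<in> I" for i
    proof -
      have "(A i / SA) powr th * (B i / SB) powr (1 - th) = (A i powr th / SA powr th) * (B i powr (1 - th) / SB powr (1 - th))"
        using SAp SBp A[OF that] B[OF that] by (simp add: powr_divide)
      then show ?thesis using SAp SBp by (simp add: field_simps)
    qed
    moreover have "(A i / SA) powr th * (B i / SB) powr (1 - th) \<le> th * (A i / SA) + (1 - th) * (B i / SB)"
      if "i \<in> I" for i
      using SAp SBp A[OF that] B[OF that] th by (intro young0) auto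
    ultimately have "(\<Sum>i\<in>I. A i powr th * B i powr (1 - th))
        \<le> (\<Sum>i\<in>I. SA powr th * SB powr (1 - th) * (th * (A i / SA) + (1 - th) * (B i / SB)))"
      by (intro sum_mono) (auto intro!: mult_left_mono)
    also have "\<dots> = SA powr th * SB powr (1 - th) * (th * (sum A I / SA) + (1 - th) * (sum B I / SB))"
      unfolding sum_distrib_left[symmetric] sum.distrib sum_divide_distrib[symmetric] by simp
    also have "\<dots> = SA powr th * SB powr (1 - th)" using SAp SBp by (simp add: SA_def[symmetric] SB_def[symmetric])
    finally show ?thesis by (simp add: SA_def SB_def)
  qed
qed


lemma ln_divp: "0 < x \<Longrightarrow> 0 < y \<Longrightarrow> ln (x / y) = ln x - ln (y::real)" by (simp add: ln_div)
lemma powr_posI: "0 < x \<Longrightarrow> 0 < x powr (b::real)" by simp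
lemmas lnrules = ln_mult_pos ln_divp ln_powr mult_pos_pos divide_pos_pos powr_posI

lemma bracketI:
  fixes p w q g Ph a :: real
  assumes "0<p" "0<w" "0<q" "0<g" "0<Ph" "0<a" "a<1"
  defines "m \<equiv> p * g powr (1/a) / Ph" and "V \<equiv> w powr a * q powr (1-a) / g"
  shows "a/(1-a) * ln (m*V/(m*w)) + ln (m*V/(m*q)) + a/(1-a) * ln (m/p) = a/(a-1) * ln Ph"
proof -
  have "a/(1-a) * ln (m*V/(m*w)) + ln (m*V/(m*q)) + a/(1-a) * ln (m/p) = 
     a/(1-a) * (ln p + 1/a * ln g - ln Ph + (a * ln w + (1-a) * ln q - ln g) - (ln p + 1/a * ln g - ln Ph + ln w))
     + (ln p + 1/a * ln g - ln Ph + (a * ln w + (1-a) * ln q - ln g) - (ln p + 1/a * ln g - ln Ph + ln q))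
     + a/(1-a) * (ln p + 1/a * ln g - ln Ph - ln p)"
    unfolding m_def V_def using assms(1-5) by (simp only: lnrules)
  also have "\<dots> = a/(a-1) * ln Ph"
  proof -
    have "1 - a \<noteq> 0" "a - 1 \<noteq> 0" "a \<noteq> 0" using assms by auto
    then show ?thesis by (simp add: divide_simps) (simp add: algebra_simps)
  qed
  finally show ?thesis .
qed

lemma keyI:
  fixes p w s1 s2 gS g PS Ph a :: real
  assumes "0<p" "0<w" "0<s1" "0<s2" "0<gS" "0<g" "0<PS" "0<Ph" "0<a" "a<1"
  shows "a/(1-a) * ln ((p * gS powr (1/a) / PS * (w powr a * s1 powr (1-a) / gS))
                     / (p * g powr (1/a) / Ph * (w powr a * s2 powr (1-a) / g)))
         + ln ((w powr a * s1 powr (1-a) / gS) / (w powr a * s2 powr (1-a) / g))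
       = ln (s1 / s2) - a/(1-a) * ln (PS / Ph)"
proof -
  have "a/(1-a) * ln ((p * gS powr (1/a) / PS * (w powr a * s1 powr (1-a) / gS))
                     / (p * g powr (1/a) / Ph * (w powr a * s2 powr (1-a) / g)))
         + ln ((w powr a * s1 powr (1-a) / gS) / (w powr a * s2 powr (1-a) / g))
     = a/(1-a) * ((ln p + 1/a * ln gS - ln PS + (a * ln w + (1-a) * ln s1 - ln gS))
                 - (ln p + 1/a * ln g - ln Ph + (a * ln w + (1-a) * ln s2 - ln g)))
       + ((a * ln w + (1-a) * ln s1 - ln gS) - (a * ln w + (1-a) * ln s2 - ln g))"
    using assms(1-8) by (simp only: lnrules)
  also have "\<dots> = ln s1 - ln s2 - a/(1-a) * (ln PS - ln Ph)"
  proof -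
    have "1 - a \<noteq> 0" "a - 1 \<noteq> 0" "a \<noteq> 0" using assms by auto
    then show ?thesis by (simp add: divide_simps) (simp add: algebra_simps)
  qed
  also have "\<dots> = ln (s1 / s2) - a/(1-a) * ln (PS / Ph)" using assms by (simp add: ln_divp)
  finally show ?thesis .
qed

lemma elem_ineq:
  fixes a T t :: real
  assumes a: "1 < a" and T: "1 \<le> T" and t: "0 \<le> t" "t \<le> T"
  shows "t powr a - 1 - a * (t - 1) \<le> (a * (a - 1) * T powr (a - 1) + (a - 1)) * (t * ln t - t + 1)"
proof -
  define C where "C = a * (a - 1) * T powr (a - 1) + (a - 1)"
  have C1: "a - 1 \<le> C" using a by (simp add: C_def)
  define k where "k s = C * (s * ln s - s + 1) - (s powr a - 1 - a * (s - 1))" for s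
  define k' where "k' s = C * ln s - a * s powr (a - 1) + a" for s
  define k'' where "k'' s = C / s - a * (a - 1) * s powr (a - 2)" for s
  have dk: "DERIV k s :> k' s" if "0 < s" for s
  proof -
    have "DERIV (\<lambda>s. s powr a) s :> a * s powr (a - 1)" using has_real_derivative_powr[OF that] .
    moreover have "DERIV (\<lambda>s. s * ln s - s + 1) s :> ln s"
      using that by (auto intro!: derivative_eq_intros)
    ultimately have "DERIV k s :> C * ln s - (a * s powr (a - 1) - 0 - a * (1 - 0))"
      unfolding k_def using that by (auto intro!: derivative_eq_intros)
    then show ?thesis by (simp add: k'_def algebra_simps)
  qed
  have dk': "DERIV k' s :> k'' s" if "0 < s" for s
  proof -
    have "DERIV (\<lambda>s. s powr (a - 1)) s :> (a - 1) * s powr (a - 1 - 1)" using has_real_derivative_powr[OF that] .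
    then have "DERIV k' s :> C * (1 / s) - a * ((a - 1) * s powr (a - 1 - 1)) + 0"
      unfolding k'_def using that by (auto intro!: derivative_eq_intros)
    then show ?thesis by (simp add: k''_def algebra_simps)
  qed
  have k''nn: "0 \<le> k'' s" if "0 < s" "s \<le> T" for s
  proof -
    have "s powr (a - 1) \<le> T powr (a - 1)" using that a by (intro powr_mono2) auto
    then have "a * (a - 1) * s powr (a - 1) \<le> a * (a - 1) * T powr (a - 1)" using a by (intro mult_left_mono) auto
    then have "a * (a - 1) * s powr (a - 1) \<le> C" using a unfolding C_def by linarith
    moreover have "s powr (a - 1) = s * s powr (a - 2)"
    proof -
      have "s powr (a - 1) = s powr (1 + (a - 2))" by simp
      also have "\<dots> = s powr 1 * s powr (a - 2)" by (rule powr_add)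
      finally show ?thesis using that by simp
    qed
    ultimately have "s * (a * (a - 1) * s powr (a - 2)) \<le> C" by (simp add: mult_ac)
    then have "a * (a - 1) * s powr (a - 2) \<le> C / s" using that by (simp add: le_divide_eq mult_ac)
    then show ?thesis by (simp add: k''_def)
  qed
  have k'1: "k' 1 = 0" by (simp add: k'_def)
  have k1: "k 1 = 0" by (simp add: k_def)
  have k'mono: "k' s \<le> k' s'" if "0 < s" "s \<le> s'" "s' \<le> T" for s s'
    using that by (intro DERIV_nonneg_imp_nondecreasing[of s s' k']) (auto intro!: exI dk' k''nn)
  show ?thesis
  proof (cases "t = 0")
    case True
    then show ?thesis using C1 a by (simp add: C_def)
  next
    case False
    then have tp: "0 < t" using t by simp
    have "k 1 \<le> k t"
    proof (cases "t \<le> 1")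
      case True
      show ?thesis
      proof (rule DERIV_nonpos_imp_nonincreasing[of t 1 k])
        fix x assume x: "t \<le> x" "x \<le> 1"
        then have "k' x \<le> k' 1" using tp T by (intro k'mono) auto
        then show "\<exists>y. DERIV k x :> y \<and> y \<le> 0" using dk[of x] x tp k'1 by auto
      qed (use True in auto)
    next
      case False
      show ?thesis
      proof (rule DERIV_nonneg_imp_nondecreasing[of 1 t k])
        fix x assume x: "1 \<le> x" "x \<le> t"
        then have "k' 1 \<le> k' x" using t by (intro k'mono) auto
        then show "\<exists>y. DERIV k x :> y \<and> 0 \<le> y" using dk[of x] x k'1 by auto
      qed (use False in auto)
    qed
    then show ?thesis using k1 by (simp add: k_def C_def)
  qed
qed
lemma eq_by_ln: "0 < x \<Longrightarrow> 0 < y \<Longrightarrow> ln x = ln (y::real) \<Longrightarrow> x = y" by simp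

lemma bracketII:
  fixes p w rho hh Z qq m a :: real
  assumes "0<p" "0<w" "0<rho" "0<hh" "0<Z" "0<qq" "0<m" "1<a"
  shows "a/(1-a) * ln (qq/(m*w)) + ln (rho/m) + a/(1-a) * ln (m/p)
       + a/(a-1) * ln (qq / (p powr (a/(2*a-1)) * hh powr (a/(2*a-1)) / Z * (w * rho powr (1 - 1/a) / hh)))
       + ln (m / (p powr (a/(2*a-1)) * hh powr (a/(2*a-1)) / Z))
     = (2*a-1)/(a-1) * ln Z"
proof -
  have "a/(1-a) * ln (qq/(m*w)) + ln (rho/m) + a/(1-a) * ln (m/p)
       + a/(a-1) * ln (qq / (p powr (a/(2*a-1)) * hh powr (a/(2*a-1)) / Z * (w * rho powr (1 - 1/a) / hh)))
       + ln (m / (p powr (a/(2*a-1)) * hh powr (a/(2*a-1)) / Z))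
     = a/(1-a) * (ln qq - (ln m + ln w)) + (ln rho - ln m) + a/(1-a) * (ln m - ln p)
       + a/(a-1) * (ln qq - (a/(2*a-1) * ln p + a/(2*a-1) * ln hh - ln Z + (ln w + (1 - 1/a) * ln rho - ln hh)))
       + (ln m - (a/(2*a-1) * ln p + a/(2*a-1) * ln hh - ln Z))"
    using assms(1-7) by (simp only: lnrules)
  also have "\<dots> = (2*a-1)/(a-1) * ln Z"
  proof -
    have "1 - a \<noteq> 0" "a - 1 \<noteq> 0" "a \<noteq> 0" "2*a-1 \<noteq> 0" using assms by auto
    then show ?thesis by (simp add: divide_simps) (simp add: algebra_simps)
  qed
  finally show ?thesis .
qed

lemma pointD1:
  fixes w r rho SX hh qY a :: real
  assumes "0<w" "0<r" "0<rho" "0<SX" "0<hh" "0<qY" "1<a"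
    and rho: "rho = SX * (w * r powr (1 - 1/a) / hh) / qY"
  shows "w powr a * qY powr (1 - a) = SX powr (1 - a) * hh powr a * (w * r powr (1 - 1/a) / hh) * (rho / r) powr (a - 1)"
proof -
  have "rho * qY = SX * (w * r powr (1 - 1/a) / hh)" using rho assms(6) by simp
  then have qY: "qY = SX * (w * r powr (1 - 1/a) / hh) / rho" using assms(3) by (metis nonzero_eq_divide_eq less_irrefl mult.commute)
  show ?thesis
  proof (rule eq_by_ln)
    show "0 < w powr a * qY powr (1 - a)" using assms by simp
    show "0 < SX powr (1 - a) * hh powr a * (w * r powr (1 - 1/a) / hh) * (rho / r) powr (a - 1)" using assms by simp
    have "ln (w powr a * qY powr (1 - a)) = a * ln w + (1 - a) * (ln SX + (ln w + (1 - 1/a) * ln r - ln hh) - ln rho)"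
      unfolding qY using assms by (simp only: lnrules)
    also have "\<dots> = (1 - a) * ln SX + a * ln hh + (ln w + (1 - 1/a) * ln r - ln hh) + (a - 1) * (ln rho - ln r)"
    proof -
      have "a \<noteq> 0" using assms by auto
      then show ?thesis by (simp add: divide_simps) (simp add: algebra_simps)
    qed
    also have "\<dots> = ln (SX powr (1 - a) * hh powr a * (w * r powr (1 - 1/a) / hh) * (rho / r) powr (a - 1))"
      using assms by (simp only: lnrules)
    finally show "ln (w powr a * qY powr (1 - a)) = ln (SX powr (1 - a) * hh powr a * (w * r powr (1 - 1/a) / hh) * (rho / r) powr (a - 1))" .
  qed
qed

lemma pointD2:
  fixes p hh Z a :: real
  assumes "0<p" "0<hh" "0<Z" "1<a"
  shows "p * (p powr (a/(2*a-1)) * hh powr (a/(2*a-1)) / Z) powr ((1 - a) / a) * hh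
       = Z powr ((2*a-1)/a) * (p powr (a/(2*a-1)) * hh powr (a/(2*a-1)) / Z)"
proof (rule eq_by_ln)
  show "0 < p * (p powr (a/(2*a-1)) * hh powr (a/(2*a-1)) / Z) powr ((1 - a) / a) * hh" using assms by simp
  show "0 < Z powr ((2*a-1)/a) * (p powr (a/(2*a-1)) * hh powr (a/(2*a-1)) / Z)" using assms by simp
  have "ln (p * (p powr (a/(2*a-1)) * hh powr (a/(2*a-1)) / Z) powr ((1 - a) / a) * hh)
      = ln p + (1 - a) / a * (a/(2*a-1) * ln p + a/(2*a-1) * ln hh - ln Z) + ln hh"
    using assms by (simp only: lnrules)
  also have "\<dots> = (2*a-1)/a * ln Z + (a/(2*a-1) * ln p + a/(2*a-1) * ln hh - ln Z)"
  proof -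
    have "a \<noteq> 0" "2*a-1 \<noteq> 0" using assms by auto
    then show ?thesis by (simp add: divide_simps) (simp add: algebra_simps)
  qed
  also have "\<dots> = ln (Z powr ((2*a-1)/a) * (p powr (a/(2*a-1)) * hh powr (a/(2*a-1)) / Z))"
    using assms by (simp only: lnrules)
  finally show "ln (p * (p powr (a/(2*a-1)) * hh powr (a/(2*a-1)) / Z) powr ((1 - a) / a) * hh)
      = ln (Z powr ((2*a-1)/a) * (p powr (a/(2*a-1)) * hh powr (a/(2*a-1)) / Z))" .
qed

lemma hold_pt:
  fixes w r q a :: real
  assumes "0 \<le> w" "0 \<le> r" "0 < q" "1 < a"
  shows "(w powr a * q powr (1 - a)) powr (1 / a) * (r * q) powr (1 - 1 / a) = w * r powr (1 - 1 / a)"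
proof (cases "w = 0 \<or> r = 0")
  case True then show ?thesis using assms by auto
next
  case False
  then have w: "0 < w" and r: "0 < r" using assms by auto
  show ?thesis
  proof (rule eq_by_ln)
    show "0 < (w powr a * q powr (1 - a)) powr (1 / a) * (r * q) powr (1 - 1 / a)" using w r assms by simp
    show "0 < w * r powr (1 - 1 / a)" using w r by simp
    have "ln ((w powr a * q powr (1 - a)) powr (1 / a) * (r * q) powr (1 - 1 / a))
        = 1 / a * (a * ln w + (1 - a) * ln q) + (1 - 1 / a) * (ln r + ln q)"
      using w r assms by (simp only: lnrules)
    also have "\<dots> = ln w + (1 - 1 / a) * ln r"
    proof -
      have "a \<noteq> 0" using assms by auto
      then show ?thesis by (simp add: divide_simps) (simp add: algebra_simps)
    qed
    also have "\<dots> = ln (w * r powr (1 - 1 / a))" using w r by (simp only: lnrules)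
    finally show "ln ((w powr a * q powr (1 - a)) powr (1 / a) * (r * q) powr (1 - 1 / a)) = ln (w * r powr (1 - 1 / a))" .
  qed
qed

lemma hold_pt2:
  fixes p qx g a :: real
  assumes "0 \<le> p" "0 < qx" "0 \<le> g" "1 < a"
  shows "(p powr a * qx powr (1 - a) * g) powr (1 / a) * qx powr (1 - 1 / a) = p * g powr (1 / a)"
proof (cases "p = 0 \<or> g = 0")
  case True then show ?thesis using assms by auto
next
  case False
  then have p: "0 < p" and g: "0 < g" using assms by auto
  show ?thesis
  proof (rule eq_by_ln)
    show "0 < (p powr a * qx powr (1 - a) * g) powr (1 / a) * qx powr (1 - 1 / a)" using p g assms by simp
    show "0 < p * g powr (1 / a)" using p g by simp
    have "ln ((p powr a * qx powr (1 - a) * g) powr (1 / a) * qx powr (1 - 1 / a))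
        = 1 / a * (a * ln p + (1 - a) * ln qx + ln g) + (1 - 1 / a) * ln qx"
      using p g assms by (simp only: lnrules)
    also have "\<dots> = ln p + 1 / a * ln g"
    proof -
      have "a \<noteq> 0" using assms by auto
      then show ?thesis by (simp add: divide_simps) (simp add: algebra_simps)
    qed
    also have "\<dots> = ln (p * g powr (1 / a))" using p g by (simp only: lnrules)
    finally show "ln ((p powr a * qx powr (1 - a) * g) powr (1 / a) * qx powr (1 - 1 / a)) = ln (p * g powr (1 / a))" .
  qed
qed

lemma sum_pos_UNIV:
  fixes t :: "'a::finite \<Rightarrow> real"
  assumes "\<And>z. 0 \<le> t z"
  shows "(\<Sum>z\<in>{z. t z > 0}. t z * f z) = (\<Sum>z\<in>UNIV. t z * f z)"
proof (rule sum.mono_neutral_left)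
  show "\<forall>i\<in>UNIV - {z. 0 < t z}. t i * f i = 0" using assms by (auto simp: not_less intro: order.antisym)
qed auto

lemma KL_eq:
  fixes p q :: "'a::finite \<Rightarrow> real"
  assumes "\<And>z. 0 \<le> p z" "\<And>z. 0 < p z \<Longrightarrow> q z \<noteq> 0"
  shows "KL p q = ereal (\<Sum>z\<in>UNIV. p z * ln (p z / q z))"
  unfolding KL_def using assms sum_pos_UNIV[of p "\<lambda>z. ln (p z / q z)"] by auto

lemma margY_ge:
  fixes t :: "'x::finite \<times> 'y::finite \<Rightarrow> real"
  assumes "\<And>z. 0 \<le> t z" shows "t (x, y) \<le> margY t y"
  unfolding margY_def by (rule member_le_sum) (auto simp: assms)

lemma margX_ge:
  fixes t :: "'x::finite \<times> 'y::finite \<Rightarrow> real"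
  assumes "\<And>z. 0 \<le> t z" shows "t (x, y) \<le> margX t x"
  unfolding margX_def by (rule member_le_sum) (auto simp: assms)

lemma margY_pos_ex:
  fixes t :: "'x::finite \<times> 'y::finite \<Rightarrow> real"
  assumes "0 < margY t y" shows "\<exists>x. 0 < t (x, y)"
proof (rule ccontr)
  assume "\<not> ?thesis" then have "margY t y \<le> 0" unfolding margY_def by (intro sum_nonpos) (auto simp: not_less)
  then show False using assms by simp
qed

lemma sum_margY:
  fixes t :: "'x::finite \<times> 'y::finite \<Rightarrow> real"
  shows "(\<Sum>y\<in>UNIV. margY t y) = (\<Sum>z\<in>UNIV. t z)"
  using sum_joint_snd[of t "\<lambda>_. 1"] by simp

lemma sum_margX:
  fixes t :: "'x::finite \<times> 'y::finite \<Rightarrow> real"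
  shows "(\<Sum>x\<in>UNIV. margX t x) = (\<Sum>z\<in>UNIV. t z)"
  using sum_joint_fst[of t "\<lambda>_. 1"] by simp

lemma finite_pos_min:
  fixes f :: "'a::finite \<Rightarrow> real"
  shows "\<exists>e>0. \<forall>z. 0 < f z \<longrightarrow> e \<le> f z"
proof (cases "{z. 0 < f z} = {}")
  case True then show ?thesis by (intro exI[of _ 1]) auto
next
  case False
  define e where "e = Min (f ` {z. 0 < f z})"
  have "e \<in> f ` {z. 0 < f z}" unfolding e_def using False by (intro Min_in) auto
  then have "0 < e" by auto
  moreover have "\<forall>z. 0 < f z \<longrightarrow> e \<le> f z" unfolding e_def by (auto intro: Min_le)
  ultimately show ?thesis by blast
qed

lemma dist_margY: assumes "is_dist q" shows "is_dist (margY q)"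
  using assms sum_margY[of q] by (auto simp: is_dist_def margY_def intro: sum_nonneg)

locale chan =
  fixes a :: real and pX :: "'x::finite \<Rightarrow> real" and W :: "'x \<Rightarrow> 'y::finite \<Rightarrow> real"
  assumes pX: "is_dist pX" and Wd: "\<And>x. is_dist (W x)" and a0: "0 < a" and a1: "a \<noteq> 1"
begin

lemma pX_nn: "0 \<le> pX x" using pX by (simp add: is_dist_def)
lemma pX_sum: "(\<Sum>x\<in>UNIV. pX x) = 1" using pX by (simp add: is_dist_def)
lemma W_nn: "0 \<le> W x y" using Wd[of x] by (simp add: is_dist_def)
lemma W_sum: "(\<Sum>y\<in>UNIV. W x y) = 1" using Wd[of x] by (simp add: is_dist_def)
lemma W_ex: "\<exists>y. 0 < W x y"
proof (rule ccontr)
  assume "\<not> ?thesis" then have "\<And>y. W x y = 0" using W_nn[of x] by (metis order.antisym not_less)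
  then show False using W_sum[of x] by simp
qed
lemma W_le1: "W x y \<le> 1"
proof -
  have "W x y \<le> (\<Sum>y\<in>UNIV. W x y)" by (rule member_le_sum) (auto simp: W_nn)
  then show ?thesis by (simp add: W_sum)
qed
lemma pX_le1: "pX x \<le> 1"
proof -
  have "pX x \<le> (\<Sum>x\<in>UNIV. pX x)" by (rule member_le_sum) (auto simp: pX_nn)
  then show ?thesis by (simp add: pX_sum)
qed

definition P :: "'x \<times> 'y \<Rightarrow> real" where "P = (\<lambda>(x, y). pX x * W x y)"

lemma P_nn: "0 \<le> P z" by (auto simp: P_def pX_nn W_nn split: prod.splits)

definition g :: "('y \<Rightarrow> real) \<Rightarrow> 'x \<Rightarrow> real" where
  "g qY x = (\<Sum>y\<in>UNIV. W x y powr a * qY y powr (1 - a))"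
definition Phi :: "('y \<Rightarrow> real) \<Rightarrow> real" where
  "Phi qY = (\<Sum>x\<in>UNIV. pX x * g qY x powr (1 / a))"
definition G :: "('y \<Rightarrow> real) \<Rightarrow> real" where
  "G qY = a / (a - 1) * ln (Phi qY)"
definition qXo :: "('y \<Rightarrow> real) \<Rightarrow> 'x \<Rightarrow> real" where
  "qXo qY x = pX x * g qY x powr (1 / a) / Phi qY"
definition suppY :: "('y \<Rightarrow> real) \<Rightarrow> bool" where
  "suppY qY \<longleftrightarrow> (\<forall>y. (\<exists>x. 0 < pX x \<and> 0 < W x y) \<longrightarrow> 0 < qY y)"

lemma g_nn: "0 \<le> g qY x" by (simp add: g_def sum_nonneg)
lemma Phi_nn: "0 \<le> Phi qY" by (simp add: Phi_def sum_nonneg pX_nn)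

lemma g_pos:
  assumes "suppY qY" "0 < pX x" shows "0 < g qY x"
proof -
  obtain y where y: "0 < W x y" using W_ex by blast
  then have "0 < qY y" using assms by (auto simp: suppY_def)
  then have "0 < W x y powr a * qY y powr (1 - a)" using y by simp
  also have "\<dots> \<le> g qY x" unfolding g_def by (rule member_le_sum) auto
  finally show ?thesis .
qed

lemma pX_ex: "\<exists>x. 0 < pX x"
proof (rule ccontr)
  assume "\<not> ?thesis" then have "\<And>x. pX x = 0" using pX_nn by (metis order.antisym not_less)
  then show False using pX_sum by simp
qed

lemma Phi_pos:
  assumes "suppY qY" shows "0 < Phi qY"
proof -
  obtain x where x: "0 < pX x" using pX_ex by blast
  then have "0 < pX x * g qY x powr (1 / a)" using g_pos[OF assms x] by simp
  also have "\<dots> \<le> Phi qY" unfolding Phi_def by (rule member_le_sum) (auto simp: pX_nn)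
  finally show ?thesis .
qed

lemma qXo_nn: "0 \<le> qXo qY x" by (simp add: qXo_def pX_nn Phi_nn)

lemma qXo_sum: assumes "0 < Phi qY" shows "(\<Sum>x\<in>UNIV. qXo qY x) = 1"
  using assms by (simp add: qXo_def sum_divide_distrib[symmetric] Phi_def[symmetric])

lemma renyi_sum:
  fixes qX :: "'x \<Rightarrow> real" and qY :: "'y \<Rightarrow> real"
  assumes "\<And>x. 0 \<le> qX x" "\<And>y. 0 \<le> qY y"
  shows "(\<Sum>z\<in>{z. P z > 0}. P z powr a * ((\<lambda>(x, y). qX x * qY y) z) powr (1 - a))
       = (\<Sum>x\<in>UNIV. pX x powr a * qX x powr (1 - a) * g qY x)"
proof -
  have "(\<Sum>z\<in>{z. P z > 0}. P z powr a * ((\<lambda>(x, y). qX x * qY y) z) powr (1 - a))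
      = (\<Sum>z\<in>UNIV. P z powr a * ((\<lambda>(x, y). qX x * qY y) z) powr (1 - a))"
  proof (rule sum.mono_neutral_left)
    show "\<forall>i\<in>UNIV - {z. 0 < P z}. P i powr a * (case i of (x, y) \<Rightarrow> qX x * qY y) powr (1 - a) = 0"
    proof
      fix i assume "i \<in> UNIV - {z. 0 < P z}"
      then have "P i = 0" using P_nn[of i] by auto
      then show "P i powr a * (case i of (x, y) \<Rightarrow> qX x * qY y) powr (1 - a) = 0" by simp
    qed
  qed auto
  also have "\<dots> = (\<Sum>x\<in>UNIV. \<Sum>y\<in>UNIV. pX x powr a * qX x powr (1 - a) * (W x y powr a * qY y powr (1 - a)))"
    unfolding sum_UNIV_pair P_def by (intro sum.cong refl) (simp add: powr_mult)
  also have "\<dots> = (\<Sum>x\<in>UNIV. pX x powr a * qX x powr (1 - a) * g qY x)"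
    by (simp add: g_def sum_distrib_left)
  finally show ?thesis .
qed

lemma opt_term:
  assumes "0 < Phi qY" "0 < pX x \<Longrightarrow> 0 < g qY x"
  shows "pX x powr a * qXo qY x powr (1 - a) * g qY x = Phi qY powr (a - 1) * (pX x * g qY x powr (1 / a))"
proof (cases "pX x = 0")
  case True then show ?thesis by (simp add: qXo_def)
next
  case False
  then have p: "0 < pX x" using pX_nn[of x] by simp
  have gp: "0 < g qY x" using assms(2) p .
  have "qXo qY x powr (1 - a) = pX x powr (1 - a) * g qY x powr ((1 - a) / a) / Phi qY powr (1 - a)"
    unfolding qXo_def by (simp add: powr_mult powr_divide powr_powr)
  then have "pX x powr a * qXo qY x powr (1 - a) * g qY x
      = (pX x powr a * pX x powr (1 - a)) * (g qY x powr ((1 - a) / a) * g qY x powr 1) / Phi qY powr (1 - a)"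
    using gp by (simp add: powr_one)
  also have "\<dots> = pX x powr (a + (1 - a)) * g qY x powr ((1 - a) / a + 1) / Phi qY powr (1 - a)"
    by (simp only: powr_add)
  also have "(1 - a) / a + 1 = 1 / a" using a0 by (simp add: field_simps)
  also have "pX x powr (a + (1 - a)) = pX x" using p by simp
  finally have e: "pX x powr a * qXo qY x powr (1 - a) * g qY x = pX x * g qY x powr (1 / a) / Phi qY powr (1 - a)" .
  have "Phi qY powr (a - 1) = inverse (Phi qY powr (1 - a))"
    using powr_minus[of "Phi qY" "1 - a"] by simp
  then show ?thesis using e by (simp add: divide_inverse mult_ac)
qed

lemma Phi_powr_a:
  assumes "0 < Phi qY"
  shows "Phi qY powr (a - 1) * Phi qY = Phi qY powr a"
proof -
  have "Phi qY powr (a - 1) * Phi qY = Phi qY powr (a - 1) * Phi qY powr 1" using assms by (simp add: powr_one)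
  also have "\<dots> = Phi qY powr (a - 1 + 1)" by (simp only: powr_add)
  finally show ?thesis by simp
qed

lemma renyi_opt:
  assumes qY: "is_dist qY" "suppY qY"
  shows "renyi_div a P (\<lambda>(x, y). qXo qY x * qY y) = ereal (G qY)"
proof -
  have Pp: "0 < Phi qY" using Phi_pos[OF qY(2)] .
  have qYnn: "\<And>y. 0 \<le> qY y" using qY(1) by (simp add: is_dist_def)
  have s: "(\<Sum>z\<in>{z. P z > 0}. P z powr a * ((\<lambda>(x, y). qXo qY x * qY y) z) powr (1 - a)) = Phi qY powr a"
  proof -
    have "(\<Sum>z\<in>{z. P z > 0}. P z powr a * ((\<lambda>(x, y). qXo qY x * qY y) z) powr (1 - a))
        = (\<Sum>x\<in>UNIV. pX x powr a * qXo qY x powr (1 - a) * g qY x)"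
      by (rule renyi_sum) (auto simp: qXo_nn qYnn)
    also have "\<dots> = (\<Sum>x\<in>UNIV. Phi qY powr (a - 1) * (pX x * g qY x powr (1 / a)))"
      by (intro sum.cong refl opt_term Pp g_pos[OF qY(2)])
    also have "\<dots> = Phi qY powr (a - 1) * Phi qY" by (simp add: Phi_def sum_distrib_left)
    also have "\<dots> = Phi qY powr a" using Phi_powr_a[OF Pp] .
    finally show ?thesis .
  qed
  have nz: "\<not> (\<exists>z. P z > 0 \<and> (\<lambda>(x, y). qXo qY x * qY y) z = 0)"
  proof
    assume "\<exists>z. P z > 0 \<and> (\<lambda>(x, y). qXo qY x * qY y) z = 0"
    then obtain x y where xy: "0 < pX x * W x y" "qXo qY x * qY y = 0" by (auto simp: P_def)
    have px: "0 < pX x" and wy: "0 < W x y" using xy(1) pX_nn[of x] W_nn[of x y]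
      by (auto simp: zero_less_mult_iff)
    have "0 < qY y" using qY(2) px wy by (auto simp: suppY_def)
    moreover have "0 < qXo qY x" unfolding qXo_def using px g_pos[OF qY(2) px] Pp by simp
    ultimately show False using xy(2) by simp
  qed
  have "renyi_div a P (\<lambda>(x, y). qXo qY x * qY y) = ereal (1 / (a - 1) * ln (Phi qY powr a))"
    unfolding renyi_div_def using nz s Pp by (auto simp: Let_def)
  also have "\<dots> = ereal (G qY)" using Pp by (simp add: G_def)
  finally show ?thesis .
qed

lemma renyi_lower_lt1:
  assumes alt: "a < 1" and qX: "is_dist qX" and qY: "is_dist qY"
    and fin: "renyi_div a P (\<lambda>(x, y). qX x * qY y) \<noteq> \<infinity>"
  shows "0 < Phi qY \<and> ereal (G qY) \<le> renyi_div a P (\<lambda>(x, y). qX x * qY y)"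
proof -
  have qXnn: "\<And>x. 0 \<le> qX x" and qXs: "(\<Sum>x\<in>UNIV. qX x) = 1" using qX by (auto simp: is_dist_def)
  have qYnn: "\<And>y. 0 \<le> qY y" using qY by (auto simp: is_dist_def)
  define s where "s = (\<Sum>z\<in>{z. P z > 0}. P z powr a * ((\<lambda>(x, y). qX x * qY y) z) powr (1 - a))"
  have s_eq: "s = (\<Sum>x\<in>UNIV. pX x powr a * qX x powr (1 - a) * g qY x)"
    unfolding s_def by (rule renyi_sum) (auto simp: qXnn qYnn)
  have r_eq: "renyi_div a P (\<lambda>(x, y). qX x * qY y) = (if s = 0 then \<infinity> else ereal (1 / (a - 1) * ln s))"
    unfolding renyi_div_def s_def using alt by (simp add: Let_def)
  have s0: "s \<noteq> 0" using fin r_eq by auto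
  have "s = (\<Sum>x\<in>UNIV. qX x powr (1 - a) * (pX x * g qY x powr (1 / a)) powr (1 - (1 - a)))"
  proof -
    have e: "(pX x * g qY x powr (1 / a)) powr a = pX x powr a * g qY x" for x
      using a0 g_nn[of qY x] by (simp add: powr_mult powr_powr)
    show ?thesis unfolding s_eq by (intro sum.cong refl) (simp add: e mult_ac)
  qed
  also have "\<dots> \<le> (\<Sum>x\<in>UNIV. qX x) powr (1 - a) * (\<Sum>x\<in>UNIV. pX x * g qY x powr (1 / a)) powr (1 - (1 - a))"
    by (rule holder_sum) (auto simp: qXnn pX_nn alt a0)
  also have "\<dots> = Phi qY powr a" by (simp add: qXs Phi_def)
  finally have sle: "s \<le> Phi qY powr a" .
  have snn: "0 \<le> s" using s_eq by (auto intro!: sum_nonneg simp: g_nn)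
  then have sp: "0 < s" using s0 by simp
  have Pp: "0 < Phi qY"
  proof (rule ccontr)
    assume "\<not> 0 < Phi qY" then have "Phi qY = 0" using Phi_nn[of qY] by simp
    then show False using sle sp by simp
  qed
  have "ln s \<le> ln (Phi qY powr a)" using sle sp Pp by (subst ln_le_cancel_iff) auto
  then have "ln s \<le> a * ln (Phi qY)" by simp
  moreover have "1 / (a - 1) < 0" using alt by simp
  ultimately have "1 / (a - 1) * (a * ln (Phi qY)) \<le> 1 / (a - 1) * ln s"
    by (intro mult_left_mono_neg) auto
  then have "a / (a - 1) * ln (Phi qY) \<le> 1 / (a - 1) * ln s" by simp
  then show ?thesis using Pp r_eq s0 by (simp add: G_def)
qed

definition V :: "('y \<Rightarrow> real) \<Rightarrow> 'x \<Rightarrow> 'y \<Rightarrow> real" where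
  "V qY x y = W x y powr a * qY y powr (1 - a) / g qY x"
definition TI :: "('y \<Rightarrow> real) \<Rightarrow> 'x \<times> 'y \<Rightarrow> real" where
  "TI qY = (\<lambda>(x, y). qXo qY x * V qY x y)"

lemma V_nn: "0 \<le> V qY x y" by (simp add: V_def g_nn)
lemma V_sum: "(\<Sum>y\<in>UNIV. V qY x y) = g qY x / g qY x"
  by (simp add: V_def g_def sum_divide_distrib[symmetric])
lemma V_sum_le: "(\<Sum>y\<in>UNIV. V qY x y) \<le> 1"
  unfolding V_sum by (cases "g qY x = 0") auto
lemma TI_nn: "0 \<le> TI qY z" by (auto simp: TI_def qXo_nn V_nn split: prod.splits)
lemma margX_TI: "margX (TI qY) x = qXo qY x"
proof -
  have "margX (TI qY) x = qXo qY x * (g qY x / g qY x)"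
    unfolding margX_def TI_def by (simp add: sum_distrib_left[symmetric] V_sum)
  also have "\<dots> = qXo qY x"
    by (cases "g qY x = 0") (auto simp: qXo_def)
  finally show ?thesis .
qed
lemma TI_sum: assumes "0 < Phi qY" shows "(\<Sum>z\<in>UNIV. TI qY z) = 1"
  using sum_margX[of "TI qY"] margX_TI qXo_sum[OF assms] by simp

lemma TI_pos:
  assumes "0 < TI qY (x, y)" "\<And>y. 0 \<le> qY y"
  shows "0 < pX x \<and> 0 < W x y \<and> 0 < qY y \<and> 0 < g qY x \<and> 0 < Phi qY \<and> 0 < qXo qY x"
proof -
  have q: "qXo qY x \<noteq> 0" and v: "V qY x y \<noteq> 0" using assms(1) by (auto simp: TI_def)
  have "pX x \<noteq> 0" "g qY x \<noteq> 0" "Phi qY \<noteq> 0" using q by (auto simp: qXo_def)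
  moreover have "W x y \<noteq> 0" "qY y \<noteq> 0" using v by (auto simp: V_def)
  moreover have "0 < qXo qY x" using q qXo_nn[of qY x] by simp
  ultimately show ?thesis using pX_nn[of x] W_nn[of x y] assms(2)[of y] g_nn[of qY x] Phi_nn[of qY] by auto
qed

lemma TI_posI:
  assumes "0 < pX x" "0 < W x y" "0 < qY y" "suppY qY"
  shows "0 < TI qY (x, y)"
  using assms g_pos[OF assms(4,1)] Phi_pos[OF assms(4)]
  by (simp add: TI_def qXo_def V_def)

lemma margY_TI_dist:
  assumes "0 < Phi qY" shows "is_dist (margY (TI qY))"
  unfolding is_dist_def using sum_margY[of "TI qY"] TI_sum[OF assms]
  by (auto simp: margY_def TI_nn intro: sum_nonneg)

lemma suppY_margY_TI:
  assumes "suppY qY" shows "suppY (margY (TI qY))"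
  unfolding suppY_def
proof (intro allI impI)
  fix y assume "\<exists>x. 0 < pX x \<and> 0 < W x y"
  then obtain x where x: "0 < pX x" "0 < W x y" by blast
  then have "0 < qY y" using assms by (auto simp: suppY_def)
  then have "0 < TI qY (x, y)" using TI_posI x assms by blast
  also have "\<dots> \<le> margY (TI qY) y" by (rule margY_ge) (rule TI_nn)
  finally show "0 < margY (TI qY) y" .
qed

lemma step_i_eq: "step_i a pX W q = TI (margY q)"
  by (simp add: step_i_def TI_def qXo_def V_def g_def Phi_def Let_def)


lemma qXo_dist: assumes "0 < Phi qY" shows "is_dist (qXo qY)"
  using qXo_sum[OF assms] by (simp add: is_dist_def qXo_nn)

lemma I_LP_alt: "I_LP a pX W = (INF qX\<in>{q. is_dist q}. INF qY\<in>{q. is_dist q}. renyi_div a P (\<lambda>(x, y). qX x * qY y))"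
  by (simp add: I_LP_def P_def)

lemma I_LP_le_G:
  assumes "is_dist qY" "suppY qY" shows "I_LP a pX W \<le> ereal (G qY)"
proof -
  have "I_LP a pX W \<le> (INF qY'\<in>{q. is_dist q}. renyi_div a P (\<lambda>(x, y). qXo qY x * qY' y))"
    unfolding I_LP_alt by (rule INF_lower) (simp add: qXo_dist Phi_pos assms)
  also have "\<dots> \<le> renyi_div a P (\<lambda>(x, y). qXo qY x * qY y)"
    by (rule INF_lower) (simp add: assms)
  also have "\<dots> = ereal (G qY)" by (rule renyi_opt[OF assms])
  finally show ?thesis .
qed


end

locale chanI = chan +
  assumes a_ge: "1/2 \<le> a" and a_lt: "a < 1"
begin

lemma F_LP_TI:
  assumes qY: "is_dist qY" "suppY qY"
  shows "F_LP a pX W (TI qY) qY = ereal (G qY)"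
proof -
  define T where "T = TI qY"
  have qYnn: "\<And>y. 0 \<le> qY y" using qY(1) by (auto simp: is_dist_def)
  have Tnn: "\<And>z. 0 \<le> T z" by (simp add: T_def TI_nn)
  have mX: "margX T = qXo qY" by (rule ext) (simp add: T_def margX_TI)
  have Tpos: "0 < pX x \<and> 0 < W x y \<and> 0 < qY y \<and> 0 < g qY x \<and> 0 < Phi qY \<and> 0 < qXo qY x"
    if "0 < T (x, y)" for x y using TI_pos[of qY x y] that qYnn by (simp add: T_def)
  have K1: "KL T (\<lambda>(x, y). margX T x * W x y)
      = ereal (\<Sum>z\<in>UNIV. T z * ln (T z / ((\<lambda>(x, y). margX T x * W x y) z)))"
    by (rule KL_eq) (auto simp: Tnn mX dest!: Tpos)
  have K2: "KL T (\<lambda>(x, y). margX T x * qY y)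
      = ereal (\<Sum>z\<in>UNIV. T z * ln (T z / ((\<lambda>(x, y). margX T x * qY y) z)))"
    by (rule KL_eq) (auto simp: Tnn mX dest!: Tpos)
  have K3: "KL (margX T) pX = ereal (\<Sum>x\<in>UNIV. margX T x * ln (margX T x / pX x))"
    by (rule KL_eq) (auto simp: mX qXo_nn, auto simp: qXo_def)
  have C: "(\<Sum>x\<in>UNIV. margX T x * ln (margX T x / pX x)) = (\<Sum>z\<in>UNIV. T z * ln (qXo qY (fst z) / pX (fst z)))"
    using sum_joint_fst[of T "\<lambda>x. ln (qXo qY x / pX x)"] mX by simp
  define B where "B z = a / (1 - a) * ln (T z / ((\<lambda>(x, y). margX T x * W x y) z))
          + ln (T z / ((\<lambda>(x, y). margX T x * qY y) z))
          + a / (1 - a) * ln (qXo qY (fst z) / pX (fst z))" for z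
  have pt: "T z * B z = T z * G qY" for z
  proof (cases z)
    case (Pair x y)
    show ?thesis
    proof (cases "T z = 0")
      case True then show ?thesis by simp
    next
      case False
      then have "0 < T (x, y)" using Tnn[of z] Pair by simp
      note p = Tpos[OF this]
      have "T (x, y) = qXo qY x * V qY x y" by (simp add: T_def TI_def)
      then have "B z = G qY"
        unfolding B_def
        using bracketI[of "pX x" "W x y" "qY y" "g qY x" "Phi qY" a] p a0 a_lt Pair
        by (simp add: mX qXo_def V_def G_def)
      then show ?thesis by simp
    qed
  qed
  have "F_LP a pX W T qY = ereal (a / (1 - a) * (\<Sum>z\<in>UNIV. T z * ln (T z / ((\<lambda>(x, y). margX T x * W x y) z)))
      + (\<Sum>z\<in>UNIV. T z * ln (T z / ((\<lambda>(x, y). margX T x * qY y) z)))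
      + a / (1 - a) * (\<Sum>z\<in>UNIV. T z * ln (qXo qY (fst z) / pX (fst z))))"
    unfolding F_LP_def K1 K2 K3 C by simp
  also have "\<dots> = ereal (\<Sum>z\<in>UNIV. T z * B z)"
    unfolding B_def by (simp add: distrib_left sum.distrib sum_distrib_left mult_ac)
  also have "\<dots> = ereal (\<Sum>z\<in>UNIV. T z * G qY)"
    by (simp add: pt)
  also have "\<dots> = ereal (G qY)"
    using TI_sum[OF Phi_pos[OF qY(2)]] by (simp add: T_def sum_distrib_right[symmetric])
  finally show ?thesis by (simp add: T_def)
qed

lemma key_i:
  assumes qY: "is_dist qY" "suppY qY" and qS: "is_dist qS" "0 < Phi qS"
  defines "t \<equiv> TI qS" and "T \<equiv> TI qY"
  defines "u \<equiv> margY t" and "q' \<equiv> margY T"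
  defines "E \<equiv> \<lambda>q. (\<Sum>z\<in>UNIV. t z * ln (u (snd z) / q (snd z)))"
  shows "G qY - G qS \<le> E qY - E q' \<and> 0 \<le> E q' \<and> 0 \<le> E qY"
proof -
  define c where "c = a / (1 - a)"
  have c1: "1 \<le> c" using a_ge a_lt by (simp add: c_def field_simps)
  have qYnn: "\<And>y. 0 \<le> qY y" using qY(1) by (auto simp: is_dist_def)
  have qSnn: "\<And>y. 0 \<le> qS y" using qS(1) by (auto simp: is_dist_def)
  have qSs: "(\<Sum>y\<in>UNIV. qS y) = 1" using qS(1) by (auto simp: is_dist_def)
  have tnn: "\<And>z. 0 \<le> t z" and Tnn: "\<And>z. 0 \<le> T z" by (simp_all add: t_def T_def TI_nn)
  have ts: "(\<Sum>z\<in>UNIV. t z) = 1" using TI_sum[OF qS(2)] by (simp add: t_def)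
  have Ts: "(\<Sum>z\<in>UNIV. T z) = 1" using TI_sum[OF Phi_pos[OF qY(2)]] by (simp add: T_def)
  have PY: "0 < Phi qY" using Phi_pos[OF qY(2)] .
  have tpos: "0 < pX x \<and> 0 < W x y \<and> 0 < qS y \<and> 0 < g qS x \<and> 0 < Phi qS \<and> 0 < qXo qS x"
    if "0 < t (x, y)" for x y using TI_pos[of qS x y] that qSnn by (simp add: t_def)
  have tpos2: "0 < qY y \<and> 0 < g qY x \<and> 0 < T (x, y) \<and> 0 < u y \<and> 0 < q' y \<and> 0 < V qY x y"
    if tp: "0 < t (x, y)" for x y
  proof -
    note p = tpos[OF tp]
    have y: "0 < qY y" using qY(2) p by (auto simp: suppY_def)
    have gy: "0 < g qY x" using g_pos[OF qY(2)] p by blast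
    have T: "0 < T (x, y)" using TI_posI[of x y qY] p y qY(2) by (simp add: T_def)
    have "t (x, y) \<le> u y" unfolding u_def by (rule margY_ge) (rule tnn)
    then have u: "0 < u y" using tp by simp
    have "T (x, y) \<le> q' y" unfolding q'_def by (rule margY_ge) (rule Tnn)
    then have q: "0 < q' y" using T by simp
    have "0 < V qY x y" using p y gy by (simp add: V_def)
    then show ?thesis using y gy T u q by simp
  qed
  have pt1: "t z * (c * ln (t z / T z) + ln (V qS (fst z) (snd z) / V qY (fst z) (snd z)))
      = t z * (ln (qS (snd z) / qY (snd z)) - c * ln (Phi qS / Phi qY))" for z
  proof (cases z)
    case (Pair x y)
    show ?thesis
    proof (cases "t z = 0")
      case True then show ?thesis by simp
    next
      case False
      then have tp: "0 < t (x, y)" using tnn[of z] Pair by simp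
      note p = tpos[OF tp] and p2 = tpos2[OF tp]
      have "c * ln (t z / T z) + ln (V qS x y / V qY x y) = ln (qS y / qY y) - c * ln (Phi qS / Phi qY)"
        using keyI[of "pX x" "W x y" "qS y" "qY y" "g qS x" "g qY x" "Phi qS" "Phi qY" a] p p2 PY a0 a_lt Pair
        by (simp add: t_def T_def TI_def qXo_def V_def c_def)
      then show ?thesis using Pair by simp
    qed
  qed
  have S1: "c * (\<Sum>z\<in>UNIV. t z * ln (t z / T z)) + (\<Sum>z\<in>UNIV. t z * ln (V qS (fst z) (snd z) / V qY (fst z) (snd z)))
      = (\<Sum>z\<in>UNIV. t z * ln (qS (snd z) / qY (snd z))) - c * ln (Phi qS / Phi qY)"
  proof -
    have "c * (\<Sum>z\<in>UNIV. t z * ln (t z / T z)) + (\<Sum>z\<in>UNIV. t z * ln (V qS (fst z) (snd z) / V qY (fst z) (snd z)))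
        = (\<Sum>z\<in>UNIV. t z * (c * ln (t z / T z) + ln (V qS (fst z) (snd z) / V qY (fst z) (snd z))))"
      by (simp add: distrib_left sum.distrib sum_distrib_left mult_ac)
    also have "\<dots> = (\<Sum>z\<in>UNIV. t z * (ln (qS (snd z) / qY (snd z)) - c * ln (Phi qS / Phi qY)))"
      by (simp add: pt1)
    also have "\<dots> = (\<Sum>z\<in>UNIV. t z * ln (qS (snd z) / qY (snd z))) - (\<Sum>z\<in>UNIV. t z * (c * ln (Phi qS / Phi qY)))"
      by (simp add: right_diff_distrib sum_subtractf)
    also have "(\<Sum>z\<in>UNIV. t z * (c * ln (Phi qS / Phi qY))) = (\<Sum>z\<in>UNIV. t z) * (c * ln (Phi qS / Phi qY))"
      by (rule sum_distrib_right[symmetric])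
    finally show ?thesis using ts by simp
  qed
  have S2: "0 \<le> (\<Sum>z\<in>UNIV. t z * ln (V qS (fst z) (snd z) / V qY (fst z) (snd z)))"
  proof -
    define s where "s z = qXo qS (fst z) * V qY (fst z) (snd z)" for z
    have snn: "\<And>z. 0 \<le> s z" by (simp add: s_def qXo_nn V_nn)
    have sp: "0 < s z" if "0 < t z" for z
      using that tpos[of "fst z" "snd z"] tpos2[of "fst z" "snd z"] by (cases z) (simp add: s_def)
    have g1: "sum t UNIV - sum s UNIV \<le> (\<Sum>z\<in>UNIV. t z * ln (t z / s z))"
      by (rule gibbs) (auto simp: tnn snn sp)
    have "sum s UNIV = (\<Sum>x\<in>UNIV. qXo qS x * (\<Sum>y\<in>UNIV. V qY x y))"
      by (simp add: s_def sum_UNIV_pair sum_distrib_left)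
    also have "\<dots> \<le> (\<Sum>x\<in>UNIV. qXo qS x * 1)"
      by (intro sum_mono mult_left_mono V_sum_le qXo_nn)
    also have "\<dots> = 1" using qXo_sum[OF qS(2)] by simp
    finally have "sum s UNIV \<le> 1" .
    moreover have eq: "t z * ln (t z / s z) = t z * ln (V qS (fst z) (snd z) / V qY (fst z) (snd z))" for z
    proof (cases "t z = 0")
      case False
      then have tp: "0 < t z" using tnn[of z] by simp
      have "qXo qS (fst z) \<noteq> 0" using tpos[of "fst z" "snd z"] tp by (cases z) auto
      then show ?thesis by (cases z) (simp add: t_def TI_def s_def)
    qed simp
    moreover have "(\<Sum>z\<in>UNIV. t z * ln (t z / s z)) = (\<Sum>z\<in>UNIV. t z * ln (V qS (fst z) (snd z) / V qY (fst z) (snd z)))"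
      by (intro sum.cong refl eq)
    ultimately show ?thesis using g1 ts by linarith
  qed
  have S3: "E q' \<le> (\<Sum>z\<in>UNIV. t z * ln (t z / T z))"
  proof -
    define s where "s z = T z * (u (snd z) / q' (snd z))" for z
    have unn: "\<And>y. 0 \<le> u y" by (simp add: u_def margY_def sum_nonneg tnn)
    have q'nn: "\<And>y. 0 \<le> q' y" by (simp add: q'_def margY_def sum_nonneg Tnn)
    have snn: "\<And>z. 0 \<le> s z" by (simp add: s_def Tnn unn q'nn)
    have sp: "0 < s z" if "0 < t z" for z
      using that tpos2[of "fst z" "snd z"] by (cases z) (simp add: s_def)
    have g1: "sum t UNIV - sum s UNIV \<le> (\<Sum>z\<in>UNIV. t z * ln (t z / s z))"
      by (rule gibbs) (auto simp: tnn snn sp)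
    have "sum s UNIV = (\<Sum>y\<in>UNIV. q' y * (u y / q' y))"
      unfolding s_def q'_def by (rule sum_joint_snd)
    also have "\<dots> \<le> (\<Sum>y\<in>UNIV. u y)"
    proof (intro sum_mono)
      fix y show "q' y * (u y / q' y) \<le> u y" by (cases "q' y = 0") (simp_all add: unn)
    qed
    also have "\<dots> = 1" using sum_margY[of t] ts by (simp add: u_def)
    finally have "sum s UNIV \<le> 1" .
    moreover have eq: "t z * ln (t z / s z) = t z * ln (t z / T z) - t z * ln (u (snd z) / q' (snd z))" for z
    proof (cases "t z = 0")
      case False
      then have tp: "0 < t z" using tnn[of z] by simp
      then have p: "0 < T z" "0 < u (snd z)" "0 < q' (snd z)" using tpos2[of "fst z" "snd z"] by (cases z; simp)+
      have "ln (t z / s z) = ln (t z / T z) - ln (u (snd z) / q' (snd z))"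
        using tp p by (simp add: s_def ln_divp ln_mult_pos)
      then show ?thesis by (simp add: right_diff_distrib[symmetric])
    qed simp
    moreover have "(\<Sum>z\<in>UNIV. t z * ln (t z / s z)) = (\<Sum>z\<in>UNIV. t z * ln (t z / T z)) - E q'"
      unfolding E_def sum_subtractf[symmetric] by (intro sum.cong refl eq)
    ultimately show ?thesis using g1 ts by linarith
  qed
  have S4: "(\<Sum>z\<in>UNIV. t z * ln (qS (snd z) / qY (snd z))) = E qY - E qS"
  proof -
    have "t z * ln (qS (snd z) / qY (snd z)) = t z * ln (u (snd z) / qY (snd z)) - t z * ln (u (snd z) / qS (snd z))" for z
    proof (cases "t z = 0")
      case False
      then have tp: "0 < t z" using tnn[of z] by simp
      then have p: "0 < qY (snd z)" "0 < u (snd z)" "0 < qS (snd z)"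
        using tpos2[of "fst z" "snd z"] tpos[of "fst z" "snd z"] by (cases z; simp)+
      then show ?thesis by (simp add: ln_divp algebra_simps)
    qed simp
    then show ?thesis by (simp add: E_def sum_subtractf)
  qed
  have Enn: "0 \<le> E q" if qd: "\<And>y. 0 \<le> q y" "sum q UNIV \<le> 1" and qp: "\<And>x y. 0 < t (x, y) \<Longrightarrow> 0 < q y" for q
  proof -
    have unn: "\<And>y. 0 \<le> u y" by (simp add: u_def margY_def sum_nonneg tnn)
    have "sum u UNIV - sum q UNIV \<le> (\<Sum>y\<in>UNIV. u y * ln (u y / q y))"
    proof (rule gibbs)
      fix y assume "0 < u y"
      then obtain x where "0 < t (x, y)" using margY_pos_ex unfolding u_def by blast
      then show "0 < q y" using qp by blast
    qed (auto simp: unn qd)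
    moreover have "sum u UNIV = 1" using sum_margY[of t] ts by (simp add: u_def)
    moreover have "E q = (\<Sum>y\<in>UNIV. u y * ln (u y / q y))"
      unfolding E_def u_def by (rule sum_joint_snd)
    ultimately show ?thesis using qd(2) by simp
  qed
  have EqS: "0 \<le> E qS" by (rule Enn) (auto simp: qSnn qSs dest: tpos)
  have Eq': "0 \<le> E q'"
  proof (rule Enn)
    show "\<And>y. 0 \<le> q' y" by (simp add: q'_def margY_def sum_nonneg Tnn)
    show "sum q' UNIV \<le> 1" using sum_margY[of T] Ts by (simp add: q'_def)
  qed (auto dest: tpos2)
  have GG: "G qY - G qS = c * ln (Phi qS / Phi qY)"
  proof -
    have "a / (a - 1) = - c" using a_lt by (simp add: c_def divide_simps) (simp add: algebra_simps)
    then show ?thesis using PY qS(2) by (simp add: G_def ln_divp algebra_simps)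
  qed
  have "c * E q' \<le> c * (\<Sum>z\<in>UNIV. t z * ln (t z / T z))" using S3 c1 by (intro mult_left_mono) auto
  moreover have "E q' \<le> c * E q'" using Eq' c1 by (metis mult_right_mono mult_1 mult.commute)
  moreover have EqY: "0 \<le> E qY"
  proof (rule Enn)
    show "\<And>y. 0 \<le> qY y" by (rule qYnn)
    show "sum qY UNIV \<le> 1" using qY(1) by (simp add: is_dist_def)
  qed (auto dest: tpos2)
  ultimately show ?thesis using GG S1 S2 S4 EqS Eq' by linarith
qed

lemma conv_i:
  assumes q0: "is_dist q0" and q0p: "\<And>z. 0 < q0 z"
  shows "(\<lambda>k. F_LP a pX W ((step_i a pX W ^^ Suc k) q0) (margY ((step_i a pX W ^^ k) q0)))
           \<longlonglongrightarrow> I_LP a pX W"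
proof -
  define qs where "qs k = margY ((step_i a pX W ^^ k) q0)" for k
  have qs_Suc: "qs (Suc k) = margY (TI (qs k))" for k by (simp add: qs_def step_i_eq)
  have inv: "is_dist (qs k) \<and> suppY (qs k)" for k
  proof (induction k)
    case 0
    have "is_dist (qs 0)" using dist_margY[OF q0] by (simp add: qs_def)
    moreover have "suppY (qs 0)" unfolding suppY_def qs_def
    proof (intro allI impI)
      fix y assume "\<exists>x. 0 < pX x \<and> 0 < W x y"
      then obtain x where "0 < pX x" by blast
      have "0 < q0 (x, y)" by (rule q0p)
      also have "\<dots> \<le> margY q0 y" by (rule margY_ge) (simp add: less_imp_le q0p)
      finally show "0 < margY ((step_i a pX W ^^ 0) q0) y" by simp
    qed
    ultimately show ?case by simp
  next
    case (Suc k)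
    then show ?case using margY_TI_dist[OF Phi_pos] suppY_margY_TI by (simp add: qs_Suc)
  qed
  have Fk: "F_LP a pX W ((step_i a pX W ^^ Suc k) q0) (margY ((step_i a pX W ^^ k) q0)) = ereal (G (qs k))" for k
    using F_LP_TI[of "qs k"] inv[of k] by (simp add: qs_def step_i_eq)
  have mono: "G (qs (Suc k)) \<le> G (qs k)" for k
  proof -
    define t where "t = TI (qs k)"
    have ts: "qs (Suc k) = margY t" by (simp add: qs_Suc t_def)
    have K: "G (qs (Suc k)) - G (qs k) \<le> (\<Sum>z\<in>UNIV. t z * ln (margY t (snd z) / qs (Suc k) (snd z)))
         - (\<Sum>z\<in>UNIV. t z * ln (margY t (snd z) / margY (TI (qs (Suc k))) (snd z)))
       \<and> 0 \<le> (\<Sum>z\<in>UNIV. t z * ln (margY t (snd z) / margY (TI (qs (Suc k))) (snd z)))"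
      using key_i[of "qs (Suc k)" "qs k"] inv[of k] inv[of "Suc k"] Phi_pos by (simp add: t_def)
    have "(\<Sum>z\<in>UNIV. t z * ln (margY t (snd z) / qs (Suc k) (snd z))) = 0"
    proof (intro sum.neutral ballI)
      fix z
      have tnn: "0 \<le> t z" by (simp add: t_def TI_nn)
      show "t z * ln (margY t (snd z) / qs (Suc k) (snd z)) = 0"
      proof (cases "t z = 0")
        case False
        then have "0 < t z" using tnn by simp
        moreover have "t z \<le> margY t (snd z)" using margY_ge[of t "fst z" "snd z"] by (simp add: t_def TI_nn)
        ultimately show ?thesis by (simp add: ts)
      qed simp
    qed
    then show ?thesis using K by linarith
  qed
  have anti: "G (qs n) \<le> G (qs m)" if "m \<le> n" for m n
    using that by (induction n) (auto intro: order.trans[OF mono] simp: le_Suc_eq)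
  have tele: "\<exists>E0. \<forall>N. (real N + 1) * (G (qs N) - G qS) \<le> E0"
    if qS: "is_dist qS" "0 < Phi qS" for qS
  proof -
    define t where "t = TI qS"
    define E where "E q = (\<Sum>z\<in>UNIV. t z * ln (margY t (snd z) / q (snd z)))" for q
    have step: "G (qs k) - G qS \<le> E (qs k) - E (qs (Suc k)) \<and> 0 \<le> E (qs (Suc k))" for k
      using key_i[of "qs k" qS] inv[of k] qS by (simp add: E_def t_def qs_Suc)
    have "(real N + 1) * (G (qs N) - G qS) \<le> E (qs 0)" for N
    proof -
      have "(\<Sum>k<Suc N. G (qs k) - G qS) \<le> (\<Sum>k<Suc N. E (qs k) - E (qs (Suc k)))"
        by (intro sum_mono) (use step in blast)
      also have "\<dots> = E (qs 0) - E (qs (Suc N))" by (rule sum_lessThan_telescope')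
      also have "\<dots> \<le> E (qs 0)" using step[of N] by simp
      finally have s: "(\<Sum>k<Suc N. G (qs k) - G qS) \<le> E (qs 0)" .
      have "(\<Sum>k<Suc N. G (qs N) - G qS) \<le> (\<Sum>k<Suc N. G (qs k) - G qS)"
        by (intro sum_mono) (simp add: anti)
      moreover have "(\<Sum>k<Suc N. G (qs N) - G qS) = (real N + 1) * (G (qs N) - G qS)" by simp
      ultimately show ?thesis using s by linarith
    qed
    then show ?thesis by blast
  qed
  have lower: "I_LP a pX W \<le> ereal (G (qs k))" for k using I_LP_le_G inv by blast
  have "(\<lambda>k. ereal (G (qs k))) \<longlonglongrightarrow> I_LP a pX W"
  proof (rule order_tendstoI)
    fix y assume "y < I_LP a pX W"
    then show "\<forall>\<^sub>F k in sequentially. y < ereal (G (qs k))"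
      using lower by (intro always_eventually allI) (blast intro: order.strict_trans2)
  next
    fix y assume y: "I_LP a pX W < y"
    then obtain qX where qX: "is_dist qX" and "(INF qY\<in>{q. is_dist q}. renyi_div a P (\<lambda>(x, y). qX x * qY y)) < y"
      unfolding I_LP_alt by (auto simp: INF_less_iff)
    then obtain qY where qY: "is_dist qY" and r: "renyi_div a P (\<lambda>(x, y). qX x * qY y) < y"
      by (auto simp: INF_less_iff)
    have fin: "renyi_div a P (\<lambda>(x, y). qX x * qY y) \<noteq> \<infinity>" using r by auto
    from renyi_lower_lt1[OF a_lt qX qY fin] r
    have Pp: "0 < Phi qY" and Gy: "ereal (G qY) < y" by auto
    obtain E0 where E0: "\<And>N. (real N + 1) * (G (qs N) - G qY) \<le> E0" using tele[OF qY Pp] by blast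
    show "\<forall>\<^sub>F k in sequentially. ereal (G (qs k)) < y"
    proof (cases y)
      case (real y')
      then have d: "0 < y' - G qY" using Gy by simp
      obtain N0 :: nat where N0: "E0 / (y' - G qY) < real N0" using reals_Archimedean2 by blast
      show ?thesis unfolding eventually_sequentially
      proof (intro exI allI impI)
        fix N assume "N0 \<le> N"
        then have "E0 / (y' - G qY) < real N + 1" using N0 by linarith
        then have "E0 < (real N + 1) * (y' - G qY)" using d by (simp add: divide_less_eq)
        then have "(real N + 1) * (G (qs N) - G qY) < (real N + 1) * (y' - G qY)" using E0[of N] by linarith
        then have "G (qs N) - G qY < y' - G qY"
          by (rule mult_less_cancel_left_pos[THEN iffD1, rotated]) simp
        then show "ereal (G (qs N)) < y" using real by simp
      qed
    next
      case PInf then show ?thesis by simp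
    next
      case MInf then show ?thesis using y by simp
    qed
  qed
  moreover have "(\<lambda>k. F_LP a pX W ((step_i a pX W ^^ Suc k) q0) (margY ((step_i a pX W ^^ k) q0)))
      = (\<lambda>k. ereal (G (qs k)))" by (rule ext, rule Fk)
  ultimately show ?thesis by simp
qed

end


lemma margX_pos_ex:
  fixes t :: "'x::finite \<times> 'y::finite \<Rightarrow> real"
  assumes "0 < margX t x" shows "\<exists>y. 0 < t (x, y)"
proof (rule ccontr)
  assume "\<not> ?thesis" then have "margX t x \<le> 0" unfolding margX_def by (intro sum_nonpos) (auto simp: not_less)
  then show False using assms by simp
qed

locale chanII = chan a pX W for a and pX :: "'x::finite \<Rightarrow> real" and W :: "'x \<Rightarrow> 'y::finite \<Rightarrow> real" +
  assumes a_gt: "1 < a"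
begin

definition hh :: "('x \<Rightarrow> 'y \<Rightarrow> real) \<Rightarrow> 'x \<Rightarrow> real" where
  "hh r x = (\<Sum>y\<in>UNIV. W x y * r x y powr (1 - 1 / a))"
definition Z :: "('x \<Rightarrow> 'y \<Rightarrow> real) \<Rightarrow> real" where
  "Z r = (\<Sum>x\<in>UNIV. pX x powr (a / (2 * a - 1)) * hh r x powr (a / (2 * a - 1)))"
definition H :: "('x \<Rightarrow> 'y \<Rightarrow> real) \<Rightarrow> real" where
  "H r = (2 * a - 1) / (a - 1) * ln (Z r)"
definition SX :: "('x \<Rightarrow> 'y \<Rightarrow> real) \<Rightarrow> 'x \<Rightarrow> real" where
  "SX r x = pX x powr (a / (2 * a - 1)) * hh r x powr (a / (2 * a - 1)) / Z r"
definition VV :: "('x \<Rightarrow> 'y \<Rightarrow> real) \<Rightarrow> 'x \<Rightarrow> 'y \<Rightarrow> real" where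
  "VV r x y = W x y * r x y powr (1 - 1 / a) / hh r x"
definition SI :: "('x \<Rightarrow> 'y \<Rightarrow> real) \<Rightarrow> 'x \<times> 'y \<Rightarrow> real" where
  "SI r = (\<lambda>(x, y). SX r x * VV r x y)"
definition chanR :: "('x \<Rightarrow> 'y \<Rightarrow> real) \<Rightarrow> bool" where
  "chanR r \<longleftrightarrow> (\<forall>x y. 0 \<le> r x y \<and> r x y \<le> 1) \<and> (\<forall>y. (\<Sum>x\<in>UNIV. r x y) \<le> 1)
     \<and> (\<forall>x y. 0 < pX x \<and> 0 < W x y \<longrightarrow> 0 < r x y)"
definition Ftr :: "('x \<times> 'y \<Rightarrow> real) \<Rightarrow> ('x \<Rightarrow> 'y \<Rightarrow> real) \<Rightarrow> real" where
  "Ftr q r = a / (1 - a) * (\<Sum>z\<in>UNIV. q z * ln (q z / (margX q (fst z) * W (fst z) (snd z))))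
     + (\<Sum>z\<in>UNIV. q z * ln (r (fst z) (snd z) / margX q (fst z)))
     + a / (1 - a) * (\<Sum>z\<in>UNIV. q z * ln (margX q (fst z) / pX (fst z)))"

lemma b_pos: "0 < a / (2 * a - 1)" using a_gt by simp
lemma b_le1: "a / (2 * a - 1) \<le> 1" using a_gt by simp
lemma e_pos: "0 < 1 - 1 / a" using a_gt by simp

lemma step_ii_eq: "step_ii a pX W q = SI (rev_chan q)"
  by (simp add: step_ii_def SI_def SX_def VV_def Z_def hh_def Let_def)

lemma chanR_nn: "chanR r \<Longrightarrow> 0 \<le> r x y" by (simp add: chanR_def)
lemma chanR_le1: "chanR r \<Longrightarrow> r x y \<le> 1" by (simp add: chanR_def)
lemma chanR_pos: "chanR r \<Longrightarrow> 0 < pX x \<Longrightarrow> 0 < W x y \<Longrightarrow> 0 < r x y" by (simp add: chanR_def)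
lemma chanR_sum: "chanR r \<Longrightarrow> (\<Sum>x\<in>UNIV. r x y) \<le> 1" by (simp add: chanR_def)

lemma hh_nn: "0 \<le> hh r x" by (simp add: hh_def sum_nonneg W_nn)
lemma hh_le1: assumes "chanR r" shows "hh r x \<le> 1"
proof -
  have "hh r x \<le> (\<Sum>y\<in>UNIV. W x y * 1)"
    unfolding hh_def using assms e_pos
    by (intro sum_mono mult_left_mono powr_le1) (auto simp: W_nn chanR_nn chanR_le1)
  then show ?thesis by (simp add: W_sum)
qed
lemma hh_pos: assumes "chanR r" "0 < pX x" shows "0 < hh r x"
proof -
  obtain y where y: "0 < W x y" using W_ex by blast
  then have "0 < W x y * r x y powr (1 - 1 / a)" using chanR_pos[OF assms y] by simp
  also have "\<dots> \<le> hh r x" unfolding hh_def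
    by (rule member_le_sum) (auto simp: W_nn)
  finally show ?thesis .
qed
lemma Z_nn: "0 \<le> Z r" by (simp add: Z_def sum_nonneg)
lemma Z_pos: assumes "chanR r" shows "0 < Z r"
proof -
  obtain x where x: "0 < pX x" using pX_ex by blast
  then have "0 < pX x powr (a / (2 * a - 1)) * hh r x powr (a / (2 * a - 1))" using hh_pos[OF assms x] by simp
  also have "\<dots> \<le> Z r" unfolding Z_def by (rule member_le_sum) auto
  finally show ?thesis .
qed
lemma Z_le: assumes "chanR r" shows "Z r \<le> real CARD('x)"
proof -
  have "Z r \<le> (\<Sum>x\<in>(UNIV::'x set). 1)"
    unfolding Z_def using b_pos
    by (intro sum_mono mult_le_one powr_le1) (auto simp: pX_nn pX_le1 hh_nn hh_le1[OF assms])
  then show ?thesis by simp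
qed
lemma SX_nn: "0 \<le> SX r x" by (simp add: SX_def Z_nn)
lemma SX_sum: assumes "0 < Z r" shows "(\<Sum>x\<in>UNIV. SX r x) = 1"
  using assms by (simp add: SX_def sum_divide_distrib[symmetric] Z_def[symmetric])
lemma VV_nn: "chanR r \<Longrightarrow> 0 \<le> VV r x y" by (simp add: VV_def hh_nn W_nn)
lemma VV_sum: "(\<Sum>y\<in>UNIV. VV r x y) = hh r x / hh r x"
  by (simp add: VV_def hh_def sum_divide_distrib[symmetric])
lemma SI_nn: "chanR r \<Longrightarrow> 0 \<le> SI r z" by (auto simp: SI_def SX_nn VV_nn split: prod.splits)
lemma margX_SI: "margX (SI r) x = SX r x"
proof -
  have "margX (SI r) x = SX r x * (hh r x / hh r x)"
    unfolding margX_def SI_def by (simp add: sum_distrib_left[symmetric] VV_sum)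
  also have "\<dots> = SX r x" using b_pos by (cases "hh r x = 0") (auto simp: SX_def)
  finally show ?thesis .
qed
lemma SI_sum: assumes "chanR r" shows "(\<Sum>z\<in>UNIV. SI r z) = 1"
  using sum_margX[of "SI r"] margX_SI SX_sum[OF Z_pos[OF assms]] by simp
lemma SI_pos:
  assumes "chanR r" "0 < SI r (x, y)"
  shows "0 < pX x \<and> 0 < W x y \<and> 0 < r x y \<and> 0 < hh r x \<and> 0 < Z r \<and> 0 < SX r x \<and> 0 < VV r x y"
proof -
  have s: "SX r x \<noteq> 0" and v: "VV r x y \<noteq> 0" using assms(2) by (auto simp: SI_def)
  have "pX x \<noteq> 0" "hh r x \<noteq> 0" using s by (auto simp: SX_def)
  moreover have "W x y \<noteq> 0" "r x y \<noteq> 0" using v by (auto simp: VV_def)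
  moreover have "0 < SX r x" using s SX_nn[of r x] by simp
  moreover have "0 < VV r x y" using v VV_nn[OF assms(1), of x y] by simp
  ultimately show ?thesis using pX_nn[of x] W_nn[of x y] chanR_nn[OF assms(1), of x y] hh_nn[of r x] Z_pos[OF assms(1)] by auto
qed
lemma SI_posI:
  assumes "chanR r" "0 < pX x" "0 < W x y"
  shows "0 < SI r (x, y)"
  using assms hh_pos[OF assms(1,2)] Z_pos[OF assms(1)] chanR_pos[OF assms]
  by (simp add: SI_def SX_def VV_def)

lemma rev_chan_margY: "rev_chan q x y = q (x, y) / margY q y"
  by (simp add: rev_chan_def margY_def)

lemma chanR_rev_chan:
  assumes nn: "\<And>z. 0 \<le> q z" and pos: "\<And>x y. 0 < pX x \<Longrightarrow> 0 < W x y \<Longrightarrow> 0 < q (x, y)"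
  shows "chanR (rev_chan q)"
  unfolding chanR_def
proof (intro conjI allI impI)
  fix x y
  have le: "q (x, y) \<le> margY q y" by (rule margY_ge) (rule nn)
  show "0 \<le> rev_chan q x y" by (simp add: rev_chan_margY nn margY_def sum_nonneg)
  show "rev_chan q x y \<le> 1" using le nn[of "(x, y)"]
    by (cases "margY q y = 0") (auto simp: rev_chan_margY divide_le_eq_1)
next
  fix y
  have "(\<Sum>x\<in>UNIV. rev_chan q x y) = margY q y / margY q y"
    by (simp add: rev_chan_margY sum_divide_distrib[symmetric] margY_def)
  then show "(\<Sum>x\<in>UNIV. rev_chan q x y) \<le> 1" by (cases "margY q y = 0") auto
next
  fix x y assume "0 < pX x \<and> 0 < W x y"
  then have p: "0 < q (x, y)" using pos by blast
  moreover have "q (x, y) \<le> margY q y" by (rule margY_ge) (rule nn)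
  ultimately show "0 < rev_chan q x y" by (simp add: rev_chan_margY)
qed

lemma chanR_next: "chanR r \<Longrightarrow> chanR (rev_chan (SI r))"
  by (rule chanR_rev_chan) (auto simp: SI_nn SI_posI)

lemma Ft_LP_eq:
  assumes nn: "\<And>z. 0 \<le> q z" and pos: "\<And>x y. 0 < q (x, y) \<Longrightarrow> 0 < pX x \<and> 0 < W x y \<and> 0 < r x y"
  shows "Ft_LP a pX W q r = ereal (Ftr q r)"
proof -
  have mpos: "0 < margX q x" if "0 < q (x, y)" for x y
    using that margX_ge[of q x y] nn by force
  have K1: "KL q (\<lambda>(x, y). margX q x * W x y) = ereal (\<Sum>z\<in>UNIV. q z * ln (q z / (margX q (fst z) * W (fst z) (snd z))))"
    by (subst KL_eq) (auto simp: nn split_beta dest: pos mpos)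
  have K2: "exp_log_ratio q r = ereal (\<Sum>z\<in>UNIV. q z * ln (r (fst z) (snd z) / margX q (fst z)))"
  proof -
    have "\<not> (\<exists>x y. 0 < q (x, y) \<and> r x y = 0)" using pos by force
    then show ?thesis unfolding exp_log_ratio_def
      using sum_pos_UNIV[of q "\<lambda>z. ln (r (fst z) (snd z) / margX q (fst z))"] nn by simp
  qed
  have K3: "KL (margX q) pX = ereal (\<Sum>z\<in>UNIV. q z * ln (margX q (fst z) / pX (fst z)))"
  proof -
    have "KL (margX q) pX = ereal (\<Sum>x\<in>UNIV. margX q x * ln (margX q x / pX x))"
    proof (rule KL_eq)
      show "\<And>x. 0 \<le> margX q x" by (simp add: margX_def sum_nonneg nn)
      fix x assume "0 < margX q x"
      then obtain y where "0 < q (x, y)" using margX_pos_ex by blast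
      then show "pX x \<noteq> 0" using pos by force
    qed
    then show ?thesis using sum_joint_fst[of q "\<lambda>x. ln (margX q x / pX x)"] by simp
  qed
  show ?thesis unfolding Ft_LP_def Ftr_def K1 K2 K3 by simp
qed


lemma Ftr_ident:
  assumes r: "chanR r" and nn: "\<And>z. 0 \<le> q z" and qs: "(\<Sum>z\<in>UNIV. q z) = 1"
    and pos: "\<And>x y. 0 < q (x, y) \<Longrightarrow> 0 < pX x \<and> 0 < W x y \<and> 0 < r x y"
  shows "Ftr q r + a / (a - 1) * (\<Sum>z\<in>UNIV. q z * ln (q z / SI r z))
           + (\<Sum>z\<in>UNIV. q z * ln (margX q (fst z) / SX r (fst z))) = H r"
proof -
  define B where "B z = a / (1 - a) * ln (q z / (margX q (fst z) * W (fst z) (snd z)))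
     + ln (r (fst z) (snd z) / margX q (fst z)) + a / (1 - a) * ln (margX q (fst z) / pX (fst z))
     + a / (a - 1) * ln (q z / SI r z) + ln (margX q (fst z) / SX r (fst z))" for z
  have pt: "q z * B z = q z * ((2 * a - 1) / (a - 1) * ln (Z r))" for z
  proof (cases z)
    case (Pair x y)
    show ?thesis
    proof (cases "q z = 0")
      case False
      then have qp: "0 < q (x, y)" using nn[of z] Pair by simp
      note p = pos[OF qp]
      have m: "0 < margX q x" using margX_ge[of q x y] nn qp by force
      have "B z = (2 * a - 1) / (a - 1) * ln (Z r)"
        unfolding B_def Pair fst_conv snd_conv
        using bracketII[of "pX x" "W x y" "r x y" "hh r x" "Z r" "q (x, y)" "margX q x" a]
          p m qp hh_pos[OF r] Z_pos[OF r] a_gt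
        by (simp add: SI_def SX_def VV_def)
      then show ?thesis by simp
    qed simp
  qed
  have "Ftr q r + a / (a - 1) * (\<Sum>z\<in>UNIV. q z * ln (q z / SI r z))
           + (\<Sum>z\<in>UNIV. q z * ln (margX q (fst z) / SX r (fst z))) = (\<Sum>z\<in>UNIV. q z * B z)"
    unfolding Ftr_def B_def by (simp add: distrib_left sum.distrib sum_distrib_left mult_ac)
  also have "\<dots> = (\<Sum>z\<in>UNIV. q z * ((2 * a - 1) / (a - 1) * ln (Z r)))" by (simp add: pt)
  also have "\<dots> = (\<Sum>z\<in>UNIV. q z) * ((2 * a - 1) / (a - 1) * ln (Z r))" by (rule sum_distrib_right[symmetric])
  also have "\<dots> = H r" using qs by (simp add: H_def)
  finally show ?thesis .
qed

lemma Ftr_le_H: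
  assumes r: "chanR r" and nn: "\<And>z. 0 \<le> q z" and qs: "(\<Sum>z\<in>UNIV. q z) = 1"
    and pos: "\<And>x y. 0 < q (x, y) \<Longrightarrow> 0 < pX x \<and> 0 < W x y \<and> 0 < r x y"
  shows "Ftr q r \<le> H r"
proof -
  have g1: "sum q UNIV - sum (SI r) UNIV \<le> (\<Sum>z\<in>UNIV. q z * ln (q z / SI r z))"
  proof (rule gibbs)
    fix z assume "0 < q z"
    then show "0 < SI r z" using pos[of "fst z" "snd z"] SI_posI[OF r] by (cases z) auto
  qed (auto simp: nn SI_nn[OF r])
  have mnn: "\<And>x. 0 \<le> margX q x" by (simp add: margX_def sum_nonneg nn)
  have g2: "sum (margX q) UNIV - sum (SX r) UNIV \<le> (\<Sum>x\<in>UNIV. margX q x * ln (margX q x / SX r x))"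
  proof (rule gibbs)
    fix x assume "0 < margX q x"
    then obtain y where "0 < q (x, y)" using margX_pos_ex by blast
    then have px: "0 < pX x" using pos by blast
    then show "0 < SX r x" using hh_pos[OF r px] Z_pos[OF r] by (simp add: SX_def)
  qed (auto simp: mnn SX_nn)
  have "0 \<le> (\<Sum>z\<in>UNIV. q z * ln (q z / SI r z))" using g1 qs SI_sum[OF r] by simp
  moreover have "0 \<le> (\<Sum>z\<in>UNIV. q z * ln (margX q (fst z) / SX r (fst z)))"
    using g2 sum_joint_fst[of q "\<lambda>x. ln (margX q x / SX r x)"] sum_margX[of q] qs SX_sum[OF Z_pos[OF r]] by simp
  moreover have "0 < a / (a - 1)" using a_gt by simp
  ultimately show ?thesis using Ftr_ident[OF assms] by (smt (verit) mult_nonneg_nonneg)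
qed

lemma Ftr_SI: assumes r: "chanR r" shows "Ftr (SI r) r = H r"
proof -
  have z1: "(\<Sum>z\<in>UNIV. SI r z * ln (SI r z / SI r z)) = 0"
    by (intro sum.neutral ballI) (auto simp: SI_nn[OF r])
  have z2: "(\<Sum>z\<in>UNIV. SI r z * ln (margX (SI r) (fst z) / SX r (fst z))) = 0"
    by (intro sum.neutral ballI) (auto simp: margX_SI)
  show ?thesis using Ftr_ident[OF r SI_nn[OF r] SI_sum[OF r]] SI_pos[OF r] z1 z2 by auto
qed

lemma A_bound:
  assumes r: "chanR r"
  defines "q \<equiv> SI r"
  defines "rho \<equiv> rev_chan q"
  defines "A \<equiv> (\<Sum>z\<in>UNIV. q z * ln (rho (fst z) (snd z) / r (fst z) (snd z)))"
  shows "0 \<le> A \<and> A \<le> H rho - H r \<and> chanR rho"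
proof -
  have nn: "\<And>z. 0 \<le> q z" by (simp add: q_def SI_nn[OF r])
  have qs: "(\<Sum>z\<in>UNIV. q z) = 1" by (simp add: q_def SI_sum[OF r])
  have cr: "chanR rho" unfolding rho_def q_def by (rule chanR_next[OF r])
  have qpos: "0 < pX x \<and> 0 < W x y \<and> 0 < r x y \<and> 0 < rho x y \<and> 0 < margY q y \<and> 0 < margX q x"
    if "0 < q (x, y)" for x y
  proof -
    have p: "0 < pX x \<and> 0 < W x y \<and> 0 < r x y" using SI_pos[OF r] that by (simp add: q_def)
    have "q (x, y) \<le> margY q y" by (rule margY_ge) (rule nn)
    then have my: "0 < margY q y" using that by simp
    have "q (x, y) \<le> margX q x" by (rule margX_ge) (rule nn)
    then have mx: "0 < margX q x" using that by simp
    have "0 < rho x y" using that my by (simp add: rho_def rev_chan_margY)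
    then show ?thesis using p my mx by simp
  qed
  have F1: "Ftr q rho \<le> H rho" by (rule Ftr_le_H[OF cr nn qs]) (use qpos in blast)
  have F2: "Ftr q r = H r" unfolding q_def by (rule Ftr_SI[OF r])
  have "Ftr q rho - Ftr q r = (\<Sum>z\<in>UNIV. q z * ln (rho (fst z) (snd z) / margX q (fst z)))
      - (\<Sum>z\<in>UNIV. q z * ln (r (fst z) (snd z) / margX q (fst z)))"
    unfolding Ftr_def by simp
  also have "\<dots> = A"
    unfolding A_def sum_subtractf[symmetric]
  proof (intro sum.cong refl)
    fix z show "q z * ln (rho (fst z) (snd z) / margX q (fst z)) - q z * ln (r (fst z) (snd z) / margX q (fst z))
        = q z * ln (rho (fst z) (snd z) / r (fst z) (snd z))"
    proof (cases "q z = 0")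
      case False
      then have "0 < q (fst z, snd z)" using nn[of z] by simp
      note p = qpos[OF this]
      then show ?thesis by (simp add: ln_divp algebra_simps)
    qed simp
  qed
  finally have AF: "A = Ftr q rho - Ftr q r" by simp
  have "0 \<le> A"
  proof -
    define s where "s z = margY q (snd z) * r (fst z) (snd z)" for z
    have snn: "\<And>z. 0 \<le> s z" by (simp add: s_def margY_def sum_nonneg nn chanR_nn[OF r])
    have g1: "sum q UNIV - sum s UNIV \<le> (\<Sum>z\<in>UNIV. q z * ln (q z / s z))"
    proof (rule gibbs)
      fix z assume "0 < q z" then show "0 < s z" using qpos[of "fst z" "snd z"] by (simp add: s_def)
    qed (auto simp: nn snn)
    have "sum s UNIV = (\<Sum>y\<in>UNIV. margY q y * (\<Sum>x\<in>UNIV. r x y))"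
      by (simp add: s_def sum_UNIV_pair sum_distrib_left sum.swap[of _ "UNIV::'x set"])
    also have "\<dots> \<le> (\<Sum>y\<in>UNIV. margY q y * 1)"
      by (intro sum_mono mult_left_mono chanR_sum[OF r]) (simp add: margY_def sum_nonneg nn)
    also have "\<dots> = 1" using sum_margY[of q] qs by simp
    finally have "sum s UNIV \<le> 1" .
    moreover have "(\<Sum>z\<in>UNIV. q z * ln (q z / s z)) = A"
      unfolding A_def
    proof (intro sum.cong refl)
      fix z show "q z * ln (q z / s z) = q z * ln (rho (fst z) (snd z) / r (fst z) (snd z))"
      proof (cases "q z = 0")
        case False
        then have "0 < q (fst z, snd z)" using nn[of z] by simp
        note p = qpos[OF this]
        have "q z / s z = rho (fst z) (snd z) / r (fst z) (snd z)"
          using p by (simp add: s_def rho_def rev_chan_margY field_simps)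
        then show ?thesis by simp
      qed simp
    qed
    ultimately show ?thesis using g1 qs by linarith
  qed
  then show ?thesis using AF F1 F2 cr by simp
qed


lemma weak_dual:
  assumes r: "chanR r" and qX: "is_dist qX" and qY: "is_dist qY"
    and fin: "renyi_div a P (\<lambda>(x, y). qX x * qY y) \<noteq> \<infinity>"
  shows "ereal (H r) \<le> renyi_div a P (\<lambda>(x, y). qX x * qY y)"
proof -
  define b where "b = a / (2 * a - 1)"
  have b0: "0 < b" and b1: "b < 1" using a_gt by (simp_all add: b_def)
  have qXnn: "\<And>x. 0 \<le> qX x" and qXs: "(\<Sum>x\<in>UNIV. qX x) = 1" using qX by (auto simp: is_dist_def)
  have qYnn: "\<And>y. 0 \<le> qY y" and qYs: "(\<Sum>y\<in>UNIV. qY y) = 1" using qY by (auto simp: is_dist_def)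
  define s where "s = (\<Sum>z\<in>{z. P z > 0}. P z powr a * ((\<lambda>(x, y). qX x * qY y) z) powr (1 - a))"
  have nz: "\<not> (\<exists>z. P z > 0 \<and> (\<lambda>(x, y). qX x * qY y) z = 0)"
  proof
    assume h: "\<exists>z. P z > 0 \<and> (\<lambda>(x, y). qX x * qY y) z = 0"
    have "renyi_div a P (\<lambda>(x, y). qX x * qY y) = \<infinity>"
      unfolding renyi_div_def by (subst if_P[OF a_gt], subst if_P[OF h], rule refl)
    then show False using fin by simp
  qed
  have ren: "renyi_div a P (\<lambda>(x, y). qX x * qY y) = ereal (1 / (a - 1) * ln s)"
    using nz a_gt unfolding renyi_div_def s_def by auto
  have posXY: "0 < qX x \<and> 0 < qY y" if "0 < pX x" "0 < W x y" for x y
  proof -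
    have "0 < P (x, y)" using that by (simp add: P_def)
    then have "qX x * qY y \<noteq> 0" using nz by auto
    then show ?thesis using qXnn[of x] qYnn[of y] by (simp add: less_le)
  qed
  have s_eq: "s = (\<Sum>x\<in>UNIV. pX x powr a * qX x powr (1 - a) * g qY x)"
    unfolding s_def by (rule renyi_sum) (auto simp: qXnn qYnn)
  define sx where "sx x = (\<Sum>y\<in>UNIV. r x y * qY y)" for x
  have sxnn: "0 \<le> sx x" for x by (simp add: sx_def sum_nonneg chanR_nn[OF r] qYnn)
  have sxs: "(\<Sum>x\<in>UNIV. sx x) \<le> 1"
  proof -
    have "(\<Sum>x\<in>UNIV. sx x) = (\<Sum>y\<in>UNIV. qY y * (\<Sum>x\<in>UNIV. r x y))"
      unfolding sx_def by (simp add: sum.swap[of _ "UNIV::'x set"] sum_distrib_left mult_ac)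
    also have "\<dots> \<le> (\<Sum>y\<in>UNIV. qY y * 1)"
      by (intro sum_mono mult_left_mono chanR_sum[OF r] qYnn)
    finally show ?thesis using qYs by simp
  qed
  have stepA: "pX x powr b * hh r x powr b \<le> (pX x * g qY x powr (1 / a)) powr b * sx x powr (1 - b)" for x
  proof (cases "pX x = 0")
    case True then show ?thesis by simp
  next
    case False
    then have px: "0 < pX x" using pX_nn[of x] by simp
    have "hh r x = (\<Sum>y\<in>UNIV. (W x y powr a * qY y powr (1 - a)) powr (1 / a) * (r x y * qY y) powr (1 - 1 / a))"
      unfolding hh_def
    proof (intro sum.cong refl)
      fix y show "W x y * r x y powr (1 - 1 / a) = (W x y powr a * qY y powr (1 - a)) powr (1 / a) * (r x y * qY y) powr (1 - 1 / a)"
      proof (cases "W x y = 0")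
        case True then show ?thesis using a_gt by simp
      next
        case False
        then have "0 < W x y" using W_nn[of x y] by simp
        then have "0 < qY y" using posXY px by blast
        then show ?thesis using hold_pt[of "W x y" "r x y" "qY y" a] W_nn chanR_nn[OF r] a_gt by simp
      qed
    qed
    also have "\<dots> \<le> (\<Sum>y\<in>UNIV. W x y powr a * qY y powr (1 - a)) powr (1 / a) * (\<Sum>y\<in>UNIV. r x y * qY y) powr (1 - 1 / a)"
      using a_gt by (intro holder_sum) (auto simp: chanR_nn[OF r] qYnn)
    also have "\<dots> = g qY x powr (1 / a) * sx x powr (1 - 1 / a)" by (simp add: g_def sx_def)
    finally have hle: "hh r x \<le> g qY x powr (1 / a) * sx x powr (1 - 1 / a)" .
    have "hh r x powr b \<le> (g qY x powr (1 / a) * sx x powr (1 - 1 / a)) powr b"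
      using hle b0 by (intro powr_mono2) (auto simp: hh_nn)
    also have "\<dots> = g qY x powr (1 / a * b) * sx x powr ((1 - 1 / a) * b)"
      by (simp only: powr_mult powr_powr)
    also have "(1 - 1 / a) * b = 1 - b" using a_gt by (simp add: b_def field_simps)
    finally have "hh r x powr b \<le> g qY x powr (1 / a * b) * sx x powr (1 - b)" .
    then have "pX x powr b * hh r x powr b \<le> pX x powr b * (g qY x powr (1 / a * b) * sx x powr (1 - b))"
      by (intro mult_left_mono) auto
    also have "\<dots> = (pX x * g qY x powr (1 / a)) powr b * sx x powr (1 - b)"
      by (simp only: powr_mult powr_powr mult.assoc)
    finally show ?thesis .
  qed
  have "Z r \<le> (\<Sum>x\<in>UNIV. (pX x * g qY x powr (1 / a)) powr b * sx x powr (1 - b))"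
    unfolding Z_def b_def[symmetric] by (intro sum_mono stepA)
  also have "\<dots> \<le> (\<Sum>x\<in>UNIV. pX x * g qY x powr (1 / a)) powr b * (\<Sum>x\<in>UNIV. sx x) powr (1 - b)"
    using b0 b1 by (intro holder_sum) (auto simp: pX_nn sxnn)
  also have "\<dots> \<le> Phi qY powr b * 1"
    unfolding Phi_def[symmetric] using sxs b1 by (intro mult_left_mono powr_le1) (auto simp: sum_nonneg sxnn)
  finally have ZP: "Z r \<le> Phi qY powr b" by simp
  have "Phi qY = (\<Sum>x\<in>UNIV. (pX x powr a * qX x powr (1 - a) * g qY x) powr (1 / a) * qX x powr (1 - 1 / a))"
    unfolding Phi_def
  proof (intro sum.cong refl)
    fix x show "pX x * g qY x powr (1 / a) = (pX x powr a * qX x powr (1 - a) * g qY x) powr (1 / a) * qX x powr (1 - 1 / a)"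
    proof (cases "pX x = 0")
      case True then show ?thesis using a_gt by simp
    next
      case False
      then have px: "0 < pX x" using pX_nn[of x] by simp
      obtain y where "0 < W x y" using W_ex by blast
      then have "0 < qX x" using posXY px by blast
      then show ?thesis using hold_pt2[of "pX x" "qX x" "g qY x" a] pX_nn g_nn a_gt by simp
    qed
  qed
  also have "\<dots> \<le> (\<Sum>x\<in>UNIV. pX x powr a * qX x powr (1 - a) * g qY x) powr (1 / a) * (\<Sum>x\<in>UNIV. qX x) powr (1 - 1 / a)"
    using a_gt by (intro holder_sum) (auto simp: qXnn g_nn)
  also have "\<dots> = s powr (1 / a)" using qXs s_eq by simp
  finally have Ps: "Phi qY \<le> s powr (1 / a)" .
  have Zp: "0 < Z r" by (rule Z_pos[OF r])
  have Pp: "0 < Phi qY"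
  proof (rule ccontr)
    assume "\<not> 0 < Phi qY" then have "Phi qY = 0" using Phi_nn[of qY] by simp
    then show False using ZP Zp b0 by simp
  qed
  have snn: "0 \<le> s" unfolding s_eq by (intro sum_nonneg) (simp add: g_nn)
  have sp: "0 < s"
  proof (rule ccontr)
    assume "\<not> 0 < s" then have "s powr (1 / a) = 0" using snn by simp
    then show False using Ps Pp by simp
  qed
  have "ln (Z r) \<le> ln (Phi qY powr b)" using ZP Zp by (subst ln_le_cancel_iff) auto
  also have "\<dots> = b * ln (Phi qY)" by simp
  also have "\<dots> \<le> b * ln (s powr (1 / a))"
  proof -
    have "ln (Phi qY) \<le> ln (s powr (1 / a))" using Ps Pp sp by (subst ln_le_cancel_iff) auto
    then show ?thesis using b0 by (intro mult_left_mono) auto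
  qed
  also have "\<dots> = b / a * ln s" by simp
  finally have lz: "ln (Z r) \<le> b / a * ln s" .
  have "H r = (2 * a - 1) / (a - 1) * ln (Z r)" by (simp add: H_def)
  also have "\<dots> \<le> (2 * a - 1) / (a - 1) * (b / a * ln s)"
    using lz a_gt by (intro mult_left_mono) auto
  also have "\<dots> = 1 / (a - 1) * ln s"
  proof -
    have "a - 1 \<noteq> 0" "a \<noteq> 0" "2 * a - 1 \<noteq> 0" using a_gt by auto
    then show ?thesis by (simp add: b_def divide_simps)
  qed
  finally show ?thesis using ren by simp
qed


lemma SI_dist: "chanR r \<Longrightarrow> is_dist (SI r)"
  by (simp add: is_dist_def SI_nn SI_sum)

lemma q_eq_margY_rev: 
  fixes q :: "'x \<times> 'y \<Rightarrow> real"
  assumes "\<And>z. 0 \<le> q z" shows "q (x, y) = margY q y * rev_chan q x y"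
proof (cases "margY q y = 0")
  case True
  have "q (x, y) \<le> margY q y" by (rule margY_ge) (rule assms)
  then show ?thesis using True assms[of "(x, y)"] by simp
qed (simp add: rev_chan_margY)

lemma gap:
  assumes r: "chanR r"
  defines "q \<equiv> SI r"
  defines "qY \<equiv> margY q" and "rho \<equiv> rev_chan q"
  defines "M \<equiv> (\<Sum>z\<in>UNIV. q z * (rho (fst z) (snd z) / r (fst z) (snd z)) powr (a - 1))"
  shows "is_dist qY \<and> suppY qY \<and> G qY \<le> H r + (M - 1) / (a - 1)"
proof -
  have qnn: "\<And>z. 0 \<le> q z" by (simp add: q_def SI_nn[OF r])
  have qd: "is_dist qY" unfolding qY_def q_def by (rule dist_margY[OF SI_dist[OF r]])
  have sY: "suppY qY" unfolding suppY_def
  proof (intro allI impI)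
    fix y assume "\<exists>x. 0 < pX x \<and> 0 < W x y"
    then obtain x where x: "0 < pX x" "0 < W x y" by blast
    have "0 < q (x, y)" using SI_posI[OF r x] by (simp add: q_def)
    also have "\<dots> \<le> qY y" unfolding qY_def by (rule margY_ge) (rule qnn)
    finally show "0 < qY y" .
  qed
  have Zp: "0 < Z r" by (rule Z_pos[OF r])
  define mm where "mm x = (\<Sum>y\<in>UNIV. VV r x y * (rho x y / r x y) powr (a - 1))" for x
  have mmnn: "0 \<le> mm x" for x by (simp add: mm_def sum_nonneg VV_nn[OF r])
  have D1: "g qY x = SX r x powr (1 - a) * hh r x powr a * mm x" if px: "0 < pX x" for x
  proof -
    have hp: "0 < hh r x" by (rule hh_pos[OF r px])
    have sp: "0 < SX r x" using px hp Zp by (simp add: SX_def)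
    have "g qY x = (\<Sum>y\<in>UNIV. SX r x powr (1 - a) * hh r x powr a * (VV r x y * (rho x y / r x y) powr (a - 1)))"
      unfolding g_def
    proof (intro sum.cong refl)
      fix y show "W x y powr a * qY y powr (1 - a) = SX r x powr (1 - a) * hh r x powr a * (VV r x y * (rho x y / r x y) powr (a - 1))"
      proof (cases "W x y = 0")
        case True then show ?thesis by (simp add: VV_def)
      next
        case False
        then have wp: "0 < W x y" using W_nn[of x y] by simp
        have rp: "0 < r x y" by (rule chanR_pos[OF r px wp])
        have qp: "0 < q (x, y)" using SI_posI[OF r px wp] by (simp add: q_def)
        have "q (x, y) \<le> qY y" unfolding qY_def by (rule margY_ge) (rule qnn)
        then have yp: "0 < qY y" using qp by simp
        have rh: "rho x y = SX r x * (W x y * r x y powr (1 - 1 / a) / hh r x) / qY y"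
          by (simp add: rho_def rev_chan_margY qY_def q_def SI_def VV_def)
        have rhop: "0 < rho x y" using rh sp wp rp hp yp by simp
        show ?thesis using pointD1[OF wp rp rhop sp hp yp a_gt rh] by (simp add: VV_def mult_ac)
      qed
    qed
    also have "\<dots> = SX r x powr (1 - a) * hh r x powr a * mm x"
      by (simp add: mm_def sum_distrib_left)
    finally show ?thesis .
  qed
  have D2: "pX x * g qY x powr (1 / a) = Z r powr ((2 * a - 1) / a) * (SX r x * mm x powr (1 / a))" for x
  proof (cases "pX x = 0")
    case True then show ?thesis by (simp add: SX_def)
  next
    case False
    then have px: "0 < pX x" using pX_nn[of x] by simp
    have hp: "0 < hh r x" by (rule hh_pos[OF r px])
    have "g qY x powr (1 / a) = SX r x powr ((1 - a) * (1 / a)) * hh r x powr (a * (1 / a)) * mm x powr (1 / a)"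
      using D1[OF px] by (simp add: powr_mult powr_powr)
    also have "(1 - a) * (1 / a) = (1 - a) / a" by simp
    also have "a * (1 / a) = 1" using a_gt by simp
    finally have "g qY x powr (1 / a) = SX r x powr ((1 - a) / a) * hh r x * mm x powr (1 / a)"
      using hp by simp
    then have "pX x * g qY x powr (1 / a) = (pX x * SX r x powr ((1 - a) / a) * hh r x) * mm x powr (1 / a)"
      by (simp add: mult_ac)
    also have "pX x * SX r x powr ((1 - a) / a) * hh r x = Z r powr ((2 * a - 1) / a) * SX r x"
      unfolding SX_def by (rule pointD2[OF px hp Zp a_gt])
    finally show ?thesis by (simp add: mult_ac)
  qed
  have PhiZ: "Phi qY = Z r powr ((2 * a - 1) / a) * (\<Sum>x\<in>UNIV. SX r x * mm x powr (1 / a))"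
    unfolding Phi_def by (simp add: D2 sum_distrib_left)
  have Msum: "(\<Sum>x\<in>UNIV. SX r x * mm x) = M"
    unfolding M_def mm_def sum_UNIV_pair
    by (simp add: sum_distrib_left q_def SI_def mult_ac)
  have "(\<Sum>x\<in>UNIV. SX r x * mm x powr (1 / a)) \<le> (\<Sum>x\<in>UNIV. SX r x * (1 / a * mm x + (1 - 1 / a)))"
  proof (intro sum_mono mult_left_mono SX_nn)
    fix x
    have "mm x powr (1 / a) * 1 powr (1 - 1 / a) \<le> 1 / a * mm x + (1 - 1 / a) * 1"
      using a_gt mmnn[of x] by (intro young0) auto
    then show "mm x powr (1 / a) \<le> 1 / a * mm x + (1 - 1 / a)" by simp
  qed
  also have "\<dots> = 1 / a * (\<Sum>x\<in>UNIV. SX r x * mm x) + (1 - 1 / a) * (\<Sum>x\<in>UNIV. SX r x)"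
    by (simp add: distrib_left sum.distrib sum_distrib_left mult_ac)
  also have "\<dots> = 1 / a * M + (1 - 1 / a)" using Msum SX_sum[OF Zp] by simp
  finally have Sle: "(\<Sum>x\<in>UNIV. SX r x * mm x powr (1 / a)) \<le> 1 / a * M + (1 - 1 / a)" .
  have Pp: "0 < Phi qY" by (rule Phi_pos[OF sY])
  define K where "K = 1 / a * M + (1 - 1 / a)"
  have PK: "Phi qY \<le> Z r powr ((2 * a - 1) / a) * K"
    unfolding PhiZ K_def by (intro mult_left_mono Sle) simp
  have Kp: "0 < K"
  proof (rule ccontr)
    assume "\<not> 0 < K" then have "Z r powr ((2 * a - 1) / a) * K \<le> 0" by (simp add: mult_nonneg_nonpos)
    then show False using PK Pp by simp
  qed
  have "ln (Phi qY) \<le> ln (Z r powr ((2 * a - 1) / a) * K)"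
    using PK Pp Kp Zp by (subst ln_le_cancel_iff) auto
  also have "\<dots> = (2 * a - 1) / a * ln (Z r) + ln K" using Zp Kp by (simp add: ln_mult_pos)
  also have "ln K \<le> K - 1" using Kp by (rule ln_le_minus_one)
  also have "K - 1 = (M - 1) / a" by (simp add: K_def diff_divide_distrib)
  finally have lP: "ln (Phi qY) \<le> (2 * a - 1) / a * ln (Z r) + (M - 1) / a" by simp
  have "G qY = a / (a - 1) * ln (Phi qY)" by (simp add: G_def)
  also have "\<dots> \<le> a / (a - 1) * ((2 * a - 1) / a * ln (Z r) + (M - 1) / a)"
    using lP a_gt by (intro mult_left_mono) auto
  also have "\<dots> = H r + (M - 1) / (a - 1)"
  proof -
    have "a - 1 \<noteq> 0" "a \<noteq> 0" using a_gt by auto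
    then show ?thesis by (simp add: H_def divide_simps)
  qed
  finally show ?thesis using qd sY by simp
qed

lemma MA:
  assumes r: "chanR r" and T: "1 \<le> T" and lb: "\<And>x y. 0 < SI r (x, y) \<Longrightarrow> 1 \<le> T * r x y"
  defines "q \<equiv> SI r"
  defines "rho \<equiv> rev_chan q"
  defines "M \<equiv> (\<Sum>z\<in>UNIV. q z * (rho (fst z) (snd z) / r (fst z) (snd z)) powr (a - 1))"
  defines "A \<equiv> (\<Sum>z\<in>UNIV. q z * ln (rho (fst z) (snd z) / r (fst z) (snd z)))"
  shows "M - 1 \<le> (a * (a - 1) * T powr (a - 1) + (a - 1)) * A"
proof -
  define C where "C = a * (a - 1) * T powr (a - 1) + (a - 1)"
  have C1: "a - 1 \<le> C" using a_gt by (simp add: C_def)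
  have qnn: "\<And>z. 0 \<le> q z" by (simp add: q_def SI_nn[OF r])
  have qs: "(\<Sum>z\<in>UNIV. q z) = 1" by (simp add: q_def SI_sum[OF r])
  define R where "R z = margY q (snd z) * r (fst z) (snd z)" for z
  have Rnn: "0 \<le> R z" for z by (simp add: R_def margY_def sum_nonneg qnn chanR_nn[OF r])
  have Rs: "(\<Sum>z\<in>UNIV. R z) \<le> 1"
  proof -
    have "(\<Sum>z\<in>UNIV. R z) = (\<Sum>y\<in>UNIV. margY q y * (\<Sum>x\<in>UNIV. r x y))"
      by (simp add: R_def sum_UNIV_pair sum_distrib_left sum.swap[of _ "UNIV::'x set"])
    also have "\<dots> \<le> (\<Sum>y\<in>UNIV. margY q y * 1)"
      by (intro sum_mono mult_left_mono chanR_sum[OF r]) (simp add: margY_def sum_nonneg qnn)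
    also have "\<dots> = 1" using sum_margY[of q] qs by simp
    finally show ?thesis .
  qed
  have pt: "q z * (rho (fst z) (snd z) / r (fst z) (snd z)) powr (a - 1) - R z - a * (q z - R z)
      \<le> C * (q z * ln (rho (fst z) (snd z) / r (fst z) (snd z)) - q z + R z)" for z
  proof (cases z)
    case (Pair x y)
    show ?thesis
    proof (cases "r x y = 0")
      case True
      have "\<not> 0 < q (x, y)"
      proof
        assume "0 < q (x, y)" then have "0 < r x y" using SI_pos[OF r] by (simp add: q_def)
        then show False using True by simp
      qed
      then have "q (x, y) = 0" using qnn[of "(x, y)"] by simp
      then show ?thesis using True Pair by (simp add: R_def)
    next
      case False
      then have rp: "0 < r x y" using chanR_nn[OF r, of x y] by simp
      define t where "t = rho x y / r x y"
      have tnn: "0 \<le> t" using rp by (simp add: t_def rho_def rev_chan_margY margY_def sum_nonneg qnn)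
      have qeq: "q (x, y) = R (x, y) * t"
        using q_eq_margY_rev[OF qnn, where x=x and y=y] rp by (simp add: R_def t_def rho_def)
      have tT: "t \<le> T"
      proof (cases "rho x y = 0")
        case True then show ?thesis using T by (simp add: t_def)
      next
        case False
        then have "q (x, y) \<noteq> 0" by (simp add: rho_def rev_chan_margY)
        then have "0 < q (x, y)" using qnn[of "(x, y)"] by simp
        then have "1 \<le> T * r x y" using lb by (simp add: q_def)
        moreover have "rho x y \<le> 1"
          using chanR_le1[OF chanR_rev_chan[OF qnn]] SI_posI[OF r] by (auto simp: rho_def q_def)
        ultimately have "rho x y \<le> T * r x y" by simp
        then show ?thesis using rp by (simp add: t_def divide_le_eq)
      qed
      have E: "t powr a - 1 - a * (t - 1) \<le> C * (t * ln t - t + 1)"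
        unfolding C_def by (rule elem_ineq[OF a_gt T tnn tT])
      have tt: "t * t powr (a - 1) = t powr a"
      proof (cases "t = 0")
        case False
        then have "0 < t" using tnn by simp
        then have "t powr 1 * t powr (a - 1) = t powr (1 + (a - 1))" by (simp only: powr_add)
        then show ?thesis using \<open>0 < t\<close> by simp
      qed simp
      have "R (x, y) * (t powr a - 1 - a * (t - 1)) \<le> R (x, y) * (C * (t * ln t - t + 1))"
        by (intro mult_left_mono E Rnn)
      moreover have qpow: "q (x, y) * t powr (a - 1) = R (x, y) * t powr a" using qeq tt by (simp add: mult.assoc)
      have L: "q (x, y) * t powr (a - 1) - R (x, y) - a * (q (x, y) - R (x, y)) = R (x, y) * (t powr a - 1 - a * (t - 1))"
        by (subst qpow) (simp add: qeq algebra_simps)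
      have Rr: "C * (q (x, y) * ln t - q (x, y) + R (x, y)) = R (x, y) * (C * (t * ln t - t + 1))"
        by (simp add: qeq algebra_simps)
      ultimately have "q (x, y) * t powr (a - 1) - R (x, y) - a * (q (x, y) - R (x, y))
          \<le> C * (q (x, y) * ln t - q (x, y) + R (x, y))" using L Rr by linarith
      then show ?thesis using Pair by (simp add: t_def)
    qed
  qed
  have "M - (\<Sum>z\<in>UNIV. R z) - a * ((\<Sum>z\<in>UNIV. q z) - (\<Sum>z\<in>UNIV. R z))
      \<le> C * (A - (\<Sum>z\<in>UNIV. q z) + (\<Sum>z\<in>UNIV. R z))"
  proof -
    have "M - (\<Sum>z\<in>UNIV. R z) - a * ((\<Sum>z\<in>UNIV. q z) - (\<Sum>z\<in>UNIV. R z))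
        = (\<Sum>z\<in>UNIV. q z * (rho (fst z) (snd z) / r (fst z) (snd z)) powr (a - 1) - R z - a * (q z - R z))"
      unfolding M_def by (simp add: sum_subtractf sum_distrib_left right_diff_distrib)
    also have "\<dots> \<le> (\<Sum>z\<in>UNIV. C * (q z * ln (rho (fst z) (snd z) / r (fst z) (snd z)) - q z + R z))"
      by (intro sum_mono pt)
    also have "\<dots> = C * (A - (\<Sum>z\<in>UNIV. q z) + (\<Sum>z\<in>UNIV. R z))"
      unfolding A_def by (simp add: sum_distrib_left[symmetric] sum.distrib sum_subtractf)
    finally show ?thesis .
  qed
  then have X: "M - (\<Sum>z\<in>UNIV. R z) - a + a * (\<Sum>z\<in>UNIV. R z) \<le> C * A - C + C * (\<Sum>z\<in>UNIV. R z)"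
    using qs by (simp add: algebra_simps)
  have "0 \<le> (1 - (\<Sum>z\<in>UNIV. R z)) * (C - (a - 1))" using Rs C1 by simp
  then have Y: "0 \<le> C - a + 1 - C * (\<Sum>z\<in>UNIV. R z) + a * (\<Sum>z\<in>UNIV. R z) - (\<Sum>z\<in>UNIV. R z)"
    by (simp add: algebra_simps)
  have "M - 1 \<le> C * A" using X Y by linarith
  then show ?thesis by (simp add: C_def)
qed


lemma SI_lower:
  assumes r: "chanR r" and mu: "0 < mu" "mu \<le> 1"
    and lbr: "\<And>x y. 0 < pX x \<Longrightarrow> 0 < W x y \<Longrightarrow> mu \<le> r x y"
    and lbp: "\<And>x y. 0 < pX x \<Longrightarrow> 0 < W x y \<Longrightarrow> mu powr (1 / a) * real CARD('x) \<le> pX x * W x y"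
    and px: "0 < pX x" and wy: "0 < W x y"
  shows "mu \<le> rev_chan (SI r) x y"
proof -
  define b where "b = a / (2 * a - 1)"
  define e where "e = 1 - 1 / a"
  have b0: "0 < b" and b1: "b \<le> 1" using a_gt by (simp_all add: b_def)
  have e0: "0 \<le> e" using a_gt by (simp add: e_def)
  define q where "q = SI r"
  have qnn: "\<And>z. 0 \<le> q z" by (simp add: q_def SI_nn[OF r])
  have qp: "0 < q (x, y)" using SI_posI[OF r px wy] by (simp add: q_def)
  have qY: "q (x, y) \<le> margY q y" by (rule margY_ge) (rule qnn)
  have qY1: "margY q y \<le> 1"
  proof -
    have "margY q y \<le> (\<Sum>y\<in>UNIV. margY q y)" by (rule member_le_sum) (auto simp: margY_def sum_nonneg qnn)
    also have "\<dots> = 1" using sum_margY[of q] SI_sum[OF r] by (simp add: q_def)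
    finally show ?thesis .
  qed
  have rev: "q (x, y) \<le> rev_chan q x y"
  proof -
    have "0 < margY q y" using qp qY by simp
    then show ?thesis using qY1 qp by (simp add: rev_chan_margY le_divide_eq)
  qed
  have hp: "0 < hh r x" by (rule hh_pos[OF r px])
  have h1: "hh r x \<le> 1" by (rule hh_le1[OF r])
  have Zp: "0 < Z r" by (rule Z_pos[OF r])
  have ZN: "Z r \<le> real CARD('x)" by (rule Z_le[OF r])
  have rp: "0 < r x y" by (rule chanR_pos[OF r px wy])
  have q_eq: "q (x, y) = (pX x powr b * (hh r x powr b / hh r x)) * (W x y * r x y powr e) / Z r"
    by (simp add: q_def SI_def SX_def VV_def b_def e_def)
  have f1: "pX x \<le> pX x powr b"
    using powr_mono'[of b 1 "pX x"] b1 pX_nn[of x] pX_le1[of x] by simp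
  have f2: "1 \<le> hh r x powr b / hh r x"
    using powr_mono'[of b 1 "hh r x"] b1 hp h1 by simp
  have f3: "mu powr e \<le> r x y powr e" using lbr[OF px wy] mu e0 by (intro powr_mono2) auto
  have f4: "pX x * (W x y * mu powr e) \<le> (pX x powr b * (hh r x powr b / hh r x)) * (W x y * r x y powr e)"
  proof (rule mult_mono)
    show "pX x \<le> pX x powr b * (hh r x powr b / hh r x)"
      using f1 f2 mult_mono[OF f1 f2] pX_nn[of x] by simp
    show "W x y * mu powr e \<le> W x y * r x y powr e" using f3 W_nn[of x y] by (intro mult_left_mono)
  qed (auto simp: pX_nn W_nn hh_nn)
  have f5: "pX x * (W x y * mu powr e) / real CARD('x) \<le> (pX x powr b * (hh r x powr b / hh r x)) * (W x y * r x y powr e) / Z r"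
    by (rule frac_le) (use f4 Zp ZN pX_nn[of x] W_nn[of x y] hh_nn[of r x] in auto)
  have f6: "mu \<le> pX x * (W x y * mu powr e) / real CARD('x)"
  proof -
    have "mu = mu powr (1 / a) * mu powr e"
    proof -
      have "mu powr (1 / a) * mu powr e = mu powr (1 / a + e)" by (simp only: powr_add)
      also have "1 / a + e = 1" by (simp add: e_def)
      finally show ?thesis using mu by simp
    qed
    also have "\<dots> \<le> (pX x * W x y / real CARD('x)) * mu powr e"
      using lbp[OF px wy] by (intro mult_right_mono) (auto simp: le_divide_eq)
    finally show ?thesis by simp
  qed
  show ?thesis using f6 f5 q_eq rev by (simp add: q_def)
qed

lemma conv_ii:
  assumes q0: "is_dist q0" and q0p: "\<And>z. 0 < q0 z"
  shows "(\<lambda>k. Ft_LP a pX W ((step_ii a pX W ^^ Suc k) q0) (rev_chan ((step_ii a pX W ^^ k) q0)))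
           \<longlonglongrightarrow> I_LP a pX W"
proof -
  define rs where "rs k = rev_chan ((step_ii a pX W ^^ k) q0)" for k
  have stepk: "(step_ii a pX W ^^ Suc k) q0 = SI (rs k)" for k by (simp add: rs_def step_ii_eq)
  have rs_Suc: "rs (Suc k) = rev_chan (SI (rs k))" for k using stepk[of k] by (simp add: rs_def)
  have q0nn: "\<And>z. 0 \<le> q0 z" using q0p less_imp_le by blast
  have cr: "chanR (rs k)" for k
  proof (induction k)
    case 0 show ?case unfolding rs_def by simp (rule chanR_rev_chan, auto simp: q0nn q0p)
  next
    case (Suc k) then show ?case by (simp add: rs_Suc chanR_next)
  qed
  have Fk: "Ft_LP a pX W ((step_ii a pX W ^^ Suc k) q0) (rev_chan ((step_ii a pX W ^^ k) q0)) = ereal (H (rs k))" for k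
  proof -
    have "Ft_LP a pX W (SI (rs k)) (rs k) = ereal (Ftr (SI (rs k)) (rs k))"
      by (rule Ft_LP_eq) (auto simp: SI_nn[OF cr] dest: SI_pos[OF cr])
    then show ?thesis using Ftr_SI[OF cr] stepk[of k] by (simp add: rs_def)
  qed
  obtain e1 where e1: "0 < e1" "\<And>z. 0 < (\<lambda>(x, y). pX x * W x y) z \<Longrightarrow> e1 \<le> (\<lambda>(x, y). pX x * W x y) z"
    using finite_pos_min by blast
  obtain e0 where e0: "0 < e0" "\<And>z. 0 < q0 z \<Longrightarrow> e0 \<le> q0 z" using finite_pos_min by blast
  define N where "N = real CARD('x)"
  have Np: "0 < N" by (simp add: N_def)
  define mu where "mu = min e0 ((e1 / N) powr a)"
  have mup: "0 < mu" using e0 e1 Np by (simp add: mu_def)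
  have q01: "q0 z \<le> 1" for z
  proof -
    have "q0 z \<le> (\<Sum>z\<in>UNIV. q0 z)" by (rule member_le_sum) (auto simp: q0nn)
    then show ?thesis using q0 by (simp add: is_dist_def)
  qed
  have mu1: "mu \<le> 1" using e0(2)[OF q0p, of undefined] q01[of undefined] by (simp add: mu_def)
  have mupow: "mu powr (1 / a) * N \<le> e1"
  proof -
    have "mu powr (1 / a) \<le> ((e1 / N) powr a) powr (1 / a)"
      using mup a_gt by (intro powr_mono2) (auto simp: mu_def)
    also have "\<dots> = e1 / N" using a_gt e1 Np by (simp add: powr_powr)
    finally show ?thesis using Np by (simp add: le_divide_eq)
  qed
  have lbp: "mu powr (1 / a) * real CARD('x) \<le> pX x * W x y" if "0 < pX x" "0 < W x y" for x y
    using mupow e1(2)[of "(x, y)"] that by (simp add: N_def)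
  have lb: "mu \<le> rs k x y" if "0 < pX x" "0 < W x y" for k x y
    using that
  proof (induction k arbitrary: x y)
    case 0
    have "q0 (x, y) \<le> margY q0 y" by (rule margY_ge) (rule q0nn)
    moreover have "margY q0 y \<le> 1"
    proof -
      have "margY q0 y \<le> (\<Sum>y\<in>UNIV. margY q0 y)" by (rule member_le_sum) (auto simp: margY_def sum_nonneg q0nn)
      also have "\<dots> = 1" using sum_margY[of q0] q0 by (simp add: is_dist_def)
      finally show ?thesis .
    qed
    ultimately have "q0 (x, y) \<le> rs 0 x y"
      using q0p[of "(x, y)"] by (simp add: rs_def rev_chan_margY le_divide_eq)
    moreover have "mu \<le> q0 (x, y)" using e0(2)[OF q0p] by (simp add: mu_def min.coboundedI1)
    ultimately show ?case by simp
  next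
    case (Suc k)
    show ?case unfolding rs_Suc
      by (rule SI_lower[OF cr mup mu1 Suc.IH lbp Suc.prems])
  qed
  define Hs where "Hs k = H (rs k)" for k
  define Ak where "Ak k = (\<Sum>z\<in>UNIV. SI (rs k) z * ln (rs (Suc k) (fst z) (snd z) / rs k (fst z) (snd z)))" for k
  have AB: "0 \<le> Ak k \<and> Ak k \<le> Hs (Suc k) - Hs k" for k
    using A_bound[OF cr[of k]] by (simp add: Ak_def Hs_def rs_Suc)
  have inc: "incseq Hs" using AB by (intro incseq_SucI) (smt (verit))
  have bnd: "Hs k \<le> (2 * a - 1) / (a - 1) * ln N" for k
  proof -
    have "ln (Z (rs k)) \<le> ln N" using Z_pos[OF cr] Z_le[OF cr] Np by (simp add: N_def)
    then have "(2 * a - 1) / (a - 1) * ln (Z (rs k)) \<le> (2 * a - 1) / (a - 1) * ln N"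
      using a_gt by (intro mult_left_mono) auto
    then show ?thesis by (simp add: Hs_def H_def)
  qed
  obtain L where L: "Hs \<longlonglongrightarrow> L" "\<And>k. Hs k \<le> L"
    using incseq_convergent[OF inc, of "(2 * a - 1) / (a - 1) * ln N"] bnd by blast
  have upper: "ereal (Hs k) \<le> I_LP a pX W" for k
    unfolding I_LP_alt
  proof (intro INF_greatest)
    fix qX :: "'x \<Rightarrow> real" and qY :: "'y \<Rightarrow> real"
    assume "qX \<in> {q. is_dist q}" "qY \<in> {q. is_dist q}"
    then show "ereal (Hs k) \<le> renyi_div a P (\<lambda>(x, y). qX x * qY y)"
      using weak_dual[OF cr[of k]] by (cases "renyi_div a P (\<lambda>(x, y). qX x * qY y) = \<infinity>") (auto simp: Hs_def)
  qed
  define T where "T = 1 / mu"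
  have T1: "1 \<le> T" using mup mu1 by (simp add: T_def)
  define C where "C = a * (a - 1) * T powr (a - 1) + (a - 1)"
  have C0: "0 \<le> C" using a_gt by (simp add: C_def)
  have lowerk: "I_LP a pX W \<le> ereal (Hs k + C / (a - 1) * (Hs (Suc k) - Hs k))" for k
  proof -
    define q where "q = SI (rs k)"
    define M where "M = (\<Sum>z\<in>UNIV. q z * (rev_chan q (fst z) (snd z) / rs k (fst z) (snd z)) powr (a - 1))"
    have g: "is_dist (margY q) \<and> suppY (margY q) \<and> G (margY q) \<le> H (rs k) + (M - 1) / (a - 1)"
      using gap[OF cr[of k]] by (simp add: q_def M_def)
    have lbk: "1 \<le> T * rs k x y" if "0 < SI (rs k) (x, y)" for x y
    proof -
      have "0 < pX x" "0 < W x y" using SI_pos[OF cr that] by auto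
      then have "mu \<le> rs k x y" by (rule lb)
      then show ?thesis using mup by (simp add: T_def le_divide_eq)
    qed
    have "M - 1 \<le> C * Ak k"
      using MA[OF cr[of k] T1 lbk] by (simp add: M_def C_def Ak_def q_def rs_Suc)
    also have "\<dots> \<le> C * (Hs (Suc k) - Hs k)" using AB[of k] C0 by (intro mult_left_mono) auto
    finally have "(M - 1) / (a - 1) \<le> C * (Hs (Suc k) - Hs k) / (a - 1)"
      using a_gt by (intro divide_right_mono) auto
    then have "G (margY q) \<le> Hs k + C / (a - 1) * (Hs (Suc k) - Hs k)" using g by (simp add: Hs_def)
    moreover have "I_LP a pX W \<le> ereal (G (margY q))" using I_LP_le_G g by blast
    ultimately show ?thesis by (meson ereal_less_eq(3) order_trans)
  qed
  have lim2: "(\<lambda>k. Hs k + C / (a - 1) * (Hs (Suc k) - Hs k)) \<longlonglongrightarrow> L + C / (a - 1) * (L - L)"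
    by (intro tendsto_intros L(1) LIMSEQ_Suc)
  have IL: "I_LP a pX W \<le> ereal L"
    using LIMSEQ_le_const[OF tendsto_ereal[OF lim2]] lowerk by auto
  have LI: "ereal L \<le> I_LP a pX W"
    using LIMSEQ_le_const2[OF tendsto_ereal[OF L(1)]] upper by auto
  have "(\<lambda>k. ereal (Hs k)) \<longlonglongrightarrow> I_LP a pX W" using tendsto_ereal[OF L(1)] IL LI by simp
  moreover have "(\<lambda>k. Ft_LP a pX W ((step_ii a pX W ^^ Suc k) q0) (rev_chan ((step_ii a pX W ^^ k) q0)))
      = (\<lambda>k. ereal (Hs k))" unfolding Hs_def by (rule ext, rule Fk)
  ultimately show ?thesis by simp
qed

end



theorem corollary4:
  fixes a :: real
    and pX :: "'x::finite \<Rightarrow> real"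
    and W :: "'x \<Rightarrow> 'y::finite \<Rightarrow> real"
    and q0 :: "'x \<times> 'y \<Rightarrow> real"
  assumes alpha: "a \<in> {1/2..<1} \<union> {1<..}"
    and pX: "is_dist pX"
    and W: "\<And>x. is_dist (W x)"
    and q0: "is_dist q0"
    and q0_pos: "\<And>z. q0 z > 0"
  shows "(a < 1 \<longrightarrow>
           (\<lambda>k. F_LP a pX W ((step_i a pX W ^^ Suc k) q0) (margY ((step_i a pX W ^^ k) q0)))
             \<longlonglongrightarrow> I_LP a pX W)
       \<and> (1 < a \<longrightarrow>
           (\<lambda>k. Ft_LP a pX W ((step_ii a pX W ^^ Suc k) q0) (rev_chan ((step_ii a pX W ^^ k) q0)))
             \<longlonglongrightarrow> I_LP a pX W)"
proof (intro conjI impI)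
  assume alt: "a < 1"
  interpret chanI a pX W
    by unfold_locales (use alpha pX W alt in auto)
  show "(\<lambda>k. F_LP a pX W ((step_i a pX W ^^ Suc k) q0) (margY ((step_i a pX W ^^ k) q0)))
             \<longlonglongrightarrow> I_LP a pX W"
    by (rule conv_i[OF q0 q0_pos])
next
  assume agt: "1 < a"
  interpret chanII a pX W
    by unfold_locales (use alpha pX W agt in auto)
  show "(\<lambda>k. Ft_LP a pX W ((step_ii a pX W ^^ Suc k) q0) (rev_chan ((step_ii a pX W ^^ k) q0)))
             \<longlonglongrightarrow> I_LP a pX W"
    by (rule conv_ii[OF q0 q0_pos])
qed

end
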